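(* Let $\beta>0$ and let $g=\phi^2 g_{flat}$ be an $H_\beta$-invariant Riemannian metric on the flat Klein bottle $K_\beta$ such that $\mathrm{sys}(K_\beta,g)=\pi$. Then, viewing $\phi$ and $\phi_\beta$ as functions of $y\in[0,\beta]$, $$\int_0^\beta\phi(y)\phi_\beta(y)\,dy\ge\int_0^\beta\phi_\beta^2(y)\,dy.$$
   Context: For $\beta>0$ let $\Gamma_\beta$ be the group of isometries of the Euclidean plane generated by $A(x,y)=(x+\pi,-y)$ and $B(x,y)=(x,y+4\beta)$; $K_\beta=\mathbb{R}^2/\Gamma_\beta$ with the induced flat metric $g_{flat}$; functions on $K_\beta$ are identified with $\Gamma_\beta$-invariant functions on $\mathbb{R}^2$. $H_\beta=\mathrm{Isom}(K_\beta,g_{flat})$; a function $\phi$ is $H_\beta$-invariant precisely when it is independent of $x$ and $\phi(y)=\phi(-y)=\phi(y+2\beta)$, so it is determined by its restriction to $[0,\beta]$, and any function on $[0,\beta]$ extends by these rules to a continuous function on $K_\beta$. Let $\phi_0(y)=\frac{2e^y}{1+e^{2y}}$, $\beta_0=\log(1+\sqrt2)$, $\beta_1=\log(2+\sqrt3)$. Define $\phi_\beta$ on $[0,\beta]$: if $\beta\le\pi/4$, $\phi_\beta\equiv\frac{\pi}{4\beta}$; if $\pi/4<\beta<\beta_0$, $\phi_\beta(y)=\phi_0(y)$ for $y\le s_\beta$ and $\phi_0(s_\beta)$ for $y>s_\beta$, where $s_\beta$ is the unique $s\in(0,\beta)$ with $\int_0^s\phi_0(y)dy+(\beta-s)\phi_0(s)=\pi/4$;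 if $\beta_0\le\beta\le\beta_1$, $\phi_\beta=\phi_0$; if $\beta>\beta_1$, $\phi_\beta(y)=\phi_0(y)$ for $y\le\beta_1$ and $\frac12$ for $y>\beta_1$. $\mathrm{sys}(K_\beta,g)$ is the infimum of $g$-lengths of noncontractible closed curves in $K_\beta$. *)

theory Defs
  imports "HOL-Analysis.Analysis"
begin

text \<open>Points of the plane are pairs (x,y). Elements of Gamma_beta are exactly
  B^m A^k : (x,y) |-> (x + k pi, (-1)^k y + 4 beta m), k,m integers.\<close>
definition deck :: "real \<Rightarrow> int \<Rightarrow> int \<Rightarrow> real \<times> real \<Rightarrow> real \<times> real" where
  "deck \<beta> k m p = (fst p + of_int k * pi, (-1) powi k * snd p + 4 * \<beta> * of_int m)"

definition conf_length :: "(real \<Rightarrow> real) \<Rightarrow> (real \<Rightarrow> real \<times> real) \<Rightarrow> real \<Rightarrow> bool" where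
  "conf_length \<phi> \<gamma> l \<longleftrightarrow>
     ((\<lambda>t. \<phi> (snd (\<gamma> t)) * norm (vector_derivative \<gamma> (at t))) has_integral l) {0..1}"

text \<open>A noncontractible closed curve in K_beta lifts to a path gamma in the plane with
  gamma(1) = T(gamma(0)) for a nontrivial deck transformation T.\<close>
definition noncontr_loop :: "real \<Rightarrow> (real \<Rightarrow> real \<times> real) \<Rightarrow> bool" where
  "noncontr_loop \<beta> \<gamma> \<longleftrightarrow> \<gamma> piecewise_C1_differentiable_on {0..1} \<and>
     (\<exists>k m. (k, m) \<noteq> (0, 0) \<and> \<gamma> 1 = deck \<beta> k m (\<gamma> 0))"

definition sys :: "real \<Rightarrow> (real \<Rightarrow> real) \<Rightarrow> real" where
  "sys \<beta> \<phi> = Inf {l. \<exists>\<gamma>. noncontr_loop \<beta> \<gamma> \<and> conf_length \<phi> \<gamma> l}"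

definition smooth_fun :: "(real \<Rightarrow> real) \<Rightarrow> bool" where
  "smooth_fun f \<longleftrightarrow> (\<forall>n. (deriv ^^ n) f differentiable_on UNIV)"

definition H_invariant :: "real \<Rightarrow> (real \<Rightarrow> real) \<Rightarrow> bool" where
  "H_invariant \<beta> \<phi> \<longleftrightarrow> (\<forall>y. \<phi> y = \<phi> (- y) \<and> \<phi> y = \<phi> (y + 2 * \<beta>))"

definition phi0 :: "real \<Rightarrow> real" where
  "phi0 y = 2 * exp y / (1 + exp (2 * y))"

definition beta0 :: real where "beta0 = ln (1 + sqrt 2)"
definition beta1 :: real where "beta1 = ln (2 + sqrt 3)"

definition s_beta :: "real \<Rightarrow> real" where
  "s_beta \<beta> = (THE s. 0 < s \<and> s < \<beta> \<and> integral {0..s} phi0 + (\<beta> - s) * phi0 s = pi / 4)"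

definition phi_beta :: "real \<Rightarrow> real \<Rightarrow> real" where
  "phi_beta \<beta> y =
     (if \<beta> \<le> pi / 4 then pi / (4 * \<beta>)
      else if \<beta> < beta0 then (if y \<le> s_beta \<beta> then phi0 y else phi0 (s_beta \<beta>))
      else if \<beta> \<le> beta1 then phi0 y
      else if y \<le> beta1 then phi0 y else 1 / 2)"

end

theory Submission
  imports Defs
begin

lemma smooth_cont: "smooth_fun \<phi> \<Longrightarrow> continuous_on UNIV \<phi>"
  unfolding smooth_fun_def
  by (metis differentiable_imp_continuous_on funpow_0)

lemma conf_lengthI:
  assumes "\<And>t. t \<in> {0..1} \<Longrightarrow> (\<gamma> has_vector_derivative \<gamma>' t) (at t)"
    and "((\<lambda>t. \<phi> (snd (\<gamma> t)) * norm (\<gamma>' t)) has_integral l) {0..1}"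
  shows "conf_length \<phi> \<gamma> l"
  unfolding conf_length_def
  by (rule has_integral_eq[OF _ assms(2)]) (simp add: vector_derivative_at[OF assms(1)])

lemma loopI:
  assumes "\<And>t. (\<gamma> has_vector_derivative \<gamma>' t) (at t)" "continuous_on UNIV \<gamma>'"
    and "(k, m) \<noteq> (0, 0)" "\<gamma> 1 = deck \<beta> k m (\<gamma> 0)"
  shows "noncontr_loop \<beta> \<gamma>"
proof -
  have "\<gamma> C1_differentiable_on {0..1}"
    unfolding C1_differentiable_on_def
    using assms(1,2) continuous_on_subset by blast
  then show ?thesis unfolding noncontr_loop_def
    using C1_differentiable_imp_piecewise assms(3,4) by blast
qed

lemma horiz_loop:
  fixes y :: real
  defines "\<gamma> \<equiv> \<lambda>t. (2*pi*t, y)"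
  shows "noncontr_loop \<beta> \<gamma>" and "conf_length \<phi> \<gamma> (2*pi*\<phi> y)"
proof -
  have d: "\<And>t. (\<gamma> has_vector_derivative (2*pi, 0)) (at t)"
    unfolding \<gamma>_def
    by (auto intro!: derivative_eq_intros simp: has_vector_derivative_def)
  show "noncontr_loop \<beta> \<gamma>"
    by (rule loopI[OF d, where k=2 and m=0]) (auto simp: \<gamma>_def deck_def)
  show "conf_length \<phi> \<gamma> (2*pi*\<phi> y)"
    apply (rule conf_lengthI[OF d])
    using has_integral_const_real[of "\<phi> y * 2 * pi" 0 1]
    by (simp add: \<gamma>_def algebra_simps)
qed

lemma len_ge:
  assumes pos: "\<forall>y. \<phi> y > 0" and sys: "sys \<beta> \<phi> = pi"
    and "noncontr_loop \<beta> \<gamma>" "conf_length \<phi> \<gamma> l"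
  shows "pi \<le> l"
proof -
  let ?S = "{l. \<exists>\<gamma>. noncontr_loop \<beta> \<gamma> \<and> conf_length \<phi> \<gamma> l}"
  have bdd: "bdd_below ?S"
  proof (rule bdd_belowI[of _ 0])
    fix x assume "x \<in> ?S"
    then obtain g where "conf_length \<phi> g x" by auto
    then show "0 \<le> x" unfolding conf_length_def
      by (rule has_integral_nonneg) (use pos in \<open>auto intro!: mult_nonneg_nonneg simp: less_imp_le\<close>)
  qed
  have "l \<in> ?S" using assms(3,4) by auto
  then have "Inf ?S \<le> l" by (rule cInf_lower[OF _ bdd])
  then show ?thesis using sys unfolding sys_def by simp
qed

definition Xf :: "real \<Rightarrow> real \<Rightarrow> real" where
  "Xf c \<theta> = \<theta> - arctan ((1 - c) * sin \<theta> * cos \<theta> / ((cos \<theta>)\<^sup>2 + c * (sin \<theta>)\<^sup>2))"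

lemma den_pos: "(c::real) > 0 \<Longrightarrow> (cos (\<theta>::real))\<^sup>2 + c * (sin \<theta>)\<^sup>2 > 0"
proof -
  assume c: "c > 0"
  have "sin \<theta> \<noteq> 0 \<or> cos \<theta> \<noteq> 0"
  proof (rule ccontr)
    assume "\<not> (sin \<theta> \<noteq> 0 \<or> cos \<theta> \<noteq> 0)"
    then show False using sin_cos_squared_add[of \<theta>] by simp
  qed
  then show ?thesis using c
    by (metis add.commute add_pos_nonneg mult_nonneg_nonneg mult_pos_pos less_imp_le zero_le_power2 zero_less_power2)
qed

lemma alg_M2N2: "(s::real)\<^sup>2 + k\<^sup>2 = 1 \<Longrightarrow> (k\<^sup>2 + c * s\<^sup>2)\<^sup>2 + ((1 - c) * s * k)\<^sup>2 = k\<^sup>2 + c\<^sup>2 * s\<^sup>2"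
  by algebra

lemma alg_num: "(s::real)\<^sup>2 + k\<^sup>2 = 1 \<Longrightarrow>
   (1-c)*(k\<^sup>2 - s\<^sup>2) * (k\<^sup>2 + c * s\<^sup>2) - (1 - c) * s * k * (2*(c-1)* s*k) = (1-c)*(k\<^sup>2 - c* s\<^sup>2)"
  by algebra

lemma Xf_deriv:
  assumes c: "c > 0"
  shows "(Xf c has_real_derivative c / ((cos \<theta>)\<^sup>2 + c\<^sup>2 * (sin \<theta>)\<^sup>2)) (at \<theta>)"
proof -
  define s k where "s = sin \<theta>" and "k = cos \<theta>"
  have sk: "s\<^sup>2 + k\<^sup>2 = 1" unfolding s_def k_def by simp
  define M where "M = k\<^sup>2 + c * s\<^sup>2"
  define N where "N = (1-c)* s*k"
  have M: "M > 0" using den_pos[OF c] unfolding M_def s_def k_def .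
  have M2: "k\<^sup>2 + c\<^sup>2 * s\<^sup>2 > 0" using den_pos[of "c^2"] c unfolding s_def k_def by simp
  have dN: "((\<lambda>\<theta>. (1-c)* sin \<theta>* cos \<theta>) has_real_derivative (1-c)*(k\<^sup>2 - s\<^sup>2)) (at \<theta>)"
    unfolding s_def k_def by (auto intro!: derivative_eq_intros simp: algebra_simps power2_eq_square)
  have dM: "((\<lambda>\<theta>. (cos \<theta>)\<^sup>2 + c * (sin \<theta>)\<^sup>2) has_real_derivative 2*(c-1)* s*k) (at \<theta>)"
    unfolding s_def k_def by (auto intro!: derivative_eq_intros simp: algebra_simps power2_eq_square)
  have dq: "((\<lambda>\<theta>. (1-c)* sin \<theta>* cos \<theta> / ((cos \<theta>)\<^sup>2 + c * (sin \<theta>)\<^sup>2)) has_real_derivative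
      ((1-c)*(k\<^sup>2 - s\<^sup>2) * M - N * (2*(c-1)* s*k)) / (M * M)) (at \<theta>)"
    using DERIV_divide[OF dN dM] M unfolding M_def N_def s_def k_def by simp
  have da: "((\<lambda>\<theta>. arctan ((1-c)* sin \<theta>* cos \<theta> / ((cos \<theta>)\<^sup>2 + c * (sin \<theta>)\<^sup>2))) has_real_derivative
      inverse (1 + (N/M)\<^sup>2) * (((1-c)*(k\<^sup>2 - s\<^sup>2) * M - N * (2*(c-1)* s*k)) / (M * M))) (at \<theta>)"
    using DERIV_chain2[OF DERIV_arctan dq] unfolding M_def N_def s_def k_def by simp
  have dX: "(Xf c has_real_derivative 1 - inverse (1 + (N/M)\<^sup>2) * (((1-c)*(k\<^sup>2 - s\<^sup>2) * M - N * (2*(c-1)* s*k)) / (M * M))) (at \<theta>)"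
    unfolding Xf_def[abs_def] by (rule DERIV_diff[OF DERIV_ident da])
  have e1: "inverse (1 + (N/M)\<^sup>2) * (((1-c)*(k\<^sup>2 - s\<^sup>2) * M - N * (2*(c-1)* s*k)) / (M * M))
      = ((1-c)*(k\<^sup>2 - c* s\<^sup>2)) / (k\<^sup>2 + c\<^sup>2 * s\<^sup>2)"
  proof -
    have "inverse (1 + (N/M)\<^sup>2) = M\<^sup>2 / (M\<^sup>2 + N\<^sup>2)" using M
      by (simp add: field_simps power2_eq_square)
    also have "M\<^sup>2 + N\<^sup>2 = k\<^sup>2 + c\<^sup>2 * s\<^sup>2" unfolding M_def N_def by (rule alg_M2N2[OF sk])
    finally have i: "inverse (1 + (N/M)\<^sup>2) = M\<^sup>2 / (k\<^sup>2 + c\<^sup>2 * s\<^sup>2)" .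
    have n: "(1-c)*(k\<^sup>2 - s\<^sup>2) * M - N * (2*(c-1)* s*k) = (1-c)*(k\<^sup>2 - c* s\<^sup>2)"
      unfolding M_def N_def by (rule alg_num[OF sk])
    have g: "\<And>X D. M\<^sup>2 / D * (X / (M * M)) = X / (D::real)" using M by (simp add: power2_eq_square)
    show ?thesis unfolding i n g ..
  qed
  have e2: "1 - ((1-c)*(k\<^sup>2 - c* s\<^sup>2)) / (k\<^sup>2 + c\<^sup>2 * s\<^sup>2) = c / (k\<^sup>2 + c\<^sup>2 * s\<^sup>2)"
  proof -
    have "k\<^sup>2 + c\<^sup>2 * s\<^sup>2 - (1-c)*(k\<^sup>2 - c* s\<^sup>2) = c" using sk by algebra
    then show ?thesis using M2 by (simp add: field_simps)
  qed
  have "(Xf c has_real_derivative c / (k\<^sup>2 + c\<^sup>2 * s\<^sup>2)) (at \<theta>)" using dX unfolding e1 e2 .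
  then show ?thesis unfolding s_def k_def .
qed

definition Gf :: "(real \<Rightarrow> real) \<Rightarrow> real \<Rightarrow> real" where
  "Gf \<phi> t = \<phi> (artanh t) / sqrt (1 - t\<^sup>2)"

lemma Dpos: "0 < (r::real) \<Longrightarrow> r < 1 \<Longrightarrow> 0 < 1 - r\<^sup>2 * (sin \<theta>)\<^sup>2"
proof -
  assume r: "0 < r" "r < 1"
  have "(sin \<theta>)\<^sup>2 \<le> 1" by (simp add: sin_squared_eq)
  moreover have "r\<^sup>2 < 1" using r by (simp add: power_less_one_iff)
  ultimately have "r\<^sup>2 * (sin \<theta>)\<^sup>2 < 1"
    by (metis le_less_trans mult_left_le zero_le_power2)
  then show ?thesis by simp
qed

lemma rsin_bound: "0 < (r::real) \<Longrightarrow> r < 1 \<Longrightarrow> -1 < r * sin \<theta> \<and> r * sin \<theta> < 1"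
proof -
  assume r: "0 < r" "r < 1"
  have "\<bar>r * sin \<theta>\<bar> \<le> r" using r abs_sin_le_one[of \<theta>]
    by (simp add: abs_mult mult_left_le)
  then show ?thesis using r by auto
qed

lemma curve_loop:
  fixes r :: real
  assumes r: "0 < r" "r < 1"
  assumes c_def: "c = sqrt (1 - r\<^sup>2)"
  assumes \<gamma>_def: "\<gamma> = (\<lambda>\<tau>. (Xf c (pi * \<tau> - pi/2), artanh (r * sin (pi * \<tau> - pi/2))))"
  assumes \<gamma>'_def: "\<gamma>' = (\<lambda>\<tau>. (pi * (c / (1 - r\<^sup>2 * (sin (pi * \<tau> - pi/2))\<^sup>2)),
                    pi * (r * cos (pi * \<tau> - pi/2) / (1 - r\<^sup>2 * (sin (pi * \<tau> - pi/2))\<^sup>2))))"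
  shows "\<And>\<tau>. (\<gamma> has_vector_derivative \<gamma>' \<tau>) (at \<tau>)"
    and "continuous_on UNIV \<gamma>'"
    and "\<gamma> 1 = deck \<beta> 1 0 (\<gamma> 0)"
    and "\<And>\<tau>. norm (\<gamma>' \<tau>) = pi / sqrt (1 - r\<^sup>2 * (sin (pi * \<tau> - pi/2))\<^sup>2)"
proof -
  have c: "c > 0" unfolding c_def using r by (simp add: power_less_one_iff)
  have c2: "c\<^sup>2 = 1 - r\<^sup>2" unfolding c_def using r by (simp add: power_less_one_iff less_imp_le)
  have Deq: "\<And>\<theta>. (cos \<theta>)\<^sup>2 + c\<^sup>2 * (sin \<theta>)\<^sup>2 = 1 - r\<^sup>2 * (sin \<theta>)\<^sup>2"
    unfolding c2 by (simp add: cos_squared_eq algebra_simps)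
  have dX: "\<And>\<theta>. (Xf c has_real_derivative c / (1 - r\<^sup>2 * (sin \<theta>)\<^sup>2)) (at \<theta>)"
    using Xf_deriv[OF c] unfolding Deq .
  have dY: "\<And>\<theta>. ((\<lambda>\<theta>. artanh (r * sin \<theta>)) has_real_derivative r * cos \<theta> / (1 - r\<^sup>2 * (sin \<theta>)\<^sup>2)) (at \<theta>)"
  proof -
    fix \<theta> :: real
    have "((\<lambda>\<theta>. r * sin \<theta>) has_real_derivative r * cos \<theta>) (at \<theta>)"
      by (auto intro!: derivative_eq_intros)
    from DERIV_chain2[OF artanh_real_has_field_derivative this] rsin_bound[OF r, of \<theta>]
    show "((\<lambda>\<theta>. artanh (r * sin \<theta>)) has_real_derivative r * cos \<theta> / (1 - r\<^sup>2 * (sin \<theta>)\<^sup>2)) (at \<theta>)"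
      by (simp add: power_mult_distrib abs_less_iff)
  qed
  show "\<And>\<tau>. (\<gamma> has_vector_derivative \<gamma>' \<tau>) (at \<tau>)"
  proof -
    fix \<tau> :: real
    have a: "((\<lambda>\<tau>. pi * \<tau> - pi/2) has_real_derivative pi) (at \<tau>)"
      by (auto intro!: derivative_eq_intros)
    have 1: "((\<lambda>\<tau>. Xf c (pi * \<tau> - pi/2)) has_real_derivative fst (\<gamma>' \<tau>)) (at \<tau>)"
      using DERIV_chain2[OF dX a] unfolding \<gamma>'_def by (simp add: mult.commute)
    have 2: "((\<lambda>\<tau>. artanh (r * sin (pi * \<tau> - pi/2))) has_real_derivative snd (\<gamma>' \<tau>)) (at \<tau>)"
      using DERIV_chain2[OF dY a] unfolding \<gamma>'_def by (simp add: mult.commute)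
    have "(\<gamma> has_vector_derivative (fst (\<gamma>' \<tau>), snd (\<gamma>' \<tau>))) (at \<tau>)"
      unfolding \<gamma>_def
      using has_vector_derivative_Pair[OF 1[unfolded has_real_derivative_iff_has_vector_derivative]
                                         2[unfolded has_real_derivative_iff_has_vector_derivative]] .
    then show "(\<gamma> has_vector_derivative \<gamma>' \<tau>) (at \<tau>)" by simp
  qed
  show "continuous_on UNIV \<gamma>'"
    unfolding \<gamma>'_def using Dpos[OF r]
    by (auto intro!: continuous_intros simp: less_imp_neq[symmetric])
  show "\<gamma> 1 = deck \<beta> 1 0 (\<gamma> 0)"
    unfolding \<gamma>_def deck_def Xf_def using r by (simp add: cos_pi_half artanh_minus_real)
  show "\<And>\<tau>. norm (\<gamma>' \<tau>) = pi / sqrt (1 - r\<^sup>2 * (sin (pi * \<tau> - pi/2))\<^sup>2)"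
  proof -
    fix \<tau> :: real
    define \<theta> where "\<theta> = pi * \<tau> - pi/2"
    define D where "D = 1 - r\<^sup>2 * (sin \<theta>)\<^sup>2"
    have D: "D > 0" unfolding D_def using Dpos[OF r] .
    have "(pi * (c / D))\<^sup>2 + (pi * (r * cos \<theta> / D))\<^sup>2 = pi\<^sup>2 * (c\<^sup>2 + r\<^sup>2 * (cos \<theta>)\<^sup>2) / D\<^sup>2"
      by (simp add: power_mult_distrib power_divide add_divide_distrib algebra_simps)
    also have "c\<^sup>2 + r\<^sup>2 * (cos \<theta>)\<^sup>2 = D" unfolding c2 D_def by (simp add: cos_squared_eq algebra_simps)
    also have "pi\<^sup>2 * D / D\<^sup>2 = (pi / sqrt D)\<^sup>2" using D by (simp add: power2_eq_square power_divide)
    finally have "sqrt ((pi * (c / D))\<^sup>2 + (pi * (r * cos \<theta> / D))\<^sup>2) = pi / sqrt D"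
      using D by simp
    then show "norm (\<gamma>' \<tau>) = pi / sqrt (1 - r\<^sup>2 * (sin (pi * \<tau> - pi/2))\<^sup>2)"
      unfolding \<gamma>'_def norm_Pair real_norm_def power2_abs \<theta>_def D_def by simp
  qed
qed


lemma curve_int:
  fixes r :: real and \<phi> :: "real \<Rightarrow> real"
  assumes len: "\<And>\<gamma> l. noncontr_loop \<beta> \<gamma> \<Longrightarrow> conf_length \<phi> \<gamma> l \<Longrightarrow> pi \<le> l"
    and cont: "continuous_on UNIV \<phi>" and r: "0 < r" "r < 1"
  shows "\<exists>L. ((\<lambda>t. Gf \<phi> t / sqrt (r\<^sup>2 - t\<^sup>2)) has_integral L) {-r..r} \<and> pi \<le> L"
proof -
  define f where "f = (\<lambda>\<tau>. \<phi> (artanh (r * sin (pi * \<tau> - pi/2))) * (pi / sqrt (1 - r\<^sup>2 * (sin (pi * \<tau> - pi/2))\<^sup>2)))"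
  have fc: "continuous_on UNIV f"
    unfolding f_def using Dpos[OF r] rsin_bound[OF r]
    by (auto intro!: continuous_intros continuous_on_compose2[OF cont] simp: less_imp_neq[symmetric])
  define c where "c = sqrt (1 - r\<^sup>2)"
  define \<gamma> where "\<gamma> = (\<lambda>\<tau>. (Xf c (pi * \<tau> - pi/2), artanh (r * sin (pi * \<tau> - pi/2))))"
  define \<gamma>' where "\<gamma>' = (\<lambda>\<tau>. (pi * (c / (1 - r\<^sup>2 * (sin (pi * \<tau> - pi/2))\<^sup>2)),
                    pi * (r * cos (pi * \<tau> - pi/2) / (1 - r\<^sup>2 * (sin (pi * \<tau> - pi/2))\<^sup>2))))"
  note cl = curve_loop[OF r c_def \<gamma>_def \<gamma>'_def]
  have loop: "noncontr_loop \<beta> \<gamma>"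
    by (rule loopI[OF cl(1) cl(2), of 1 0]) (use cl(3) in auto)
  have "(f has_integral integral {0..1} f) {0..1}"
    using integrable_continuous_real[OF continuous_on_subset[OF fc]] by blast
  then have "conf_length \<phi> \<gamma> (integral {0..1} f)"
    by (intro conf_lengthI[OF cl(1)]) (simp add: cl(4) f_def \<gamma>_def)
  then have piL: "pi \<le> integral {0..1} f" using len[OF loop] by blast
  define g where "g = (\<lambda>t. arccos (- t / r) / pi)"
  define g' where "g' = (\<lambda>t. 1 / (pi * sqrt (r\<^sup>2 - t\<^sup>2)))"
  have gc: "continuous_on {-r..r} g"
    unfolding g_def using r by (auto intro!: continuous_intros simp: field_simps)
  have gsub: "g ` {-r..r} \<subseteq> {0..1}"
    unfolding g_def using r arccos_bounded by (auto simp: field_simps)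
  have gd: "(g has_field_derivative g' t) (at t within {-r..r})" if t: "t \<in> {-r..r} - {-r, r}" for t
  proof -
    have t1: "-1 < - t / r" "- t / r < 1" using t r by (auto simp: field_simps)
    have a: "((\<lambda>t. - t / r) has_real_derivative - 1 / r) (at t)"
      using r by (auto intro!: derivative_eq_intros)
    have "(g has_real_derivative inverse (- sqrt (1 - (- t / r)\<^sup>2)) * (- 1 / r) / pi) (at t)"
      unfolding g_def by (rule DERIV_cdivide[OF DERIV_chain2[OF DERIV_arccos[OF t1] a]])
    moreover have "inverse (- sqrt (1 - (- t / r)\<^sup>2)) * (- 1 / r) / pi = g' t"
    proof -
      have "1 - (- t / r)\<^sup>2 = (r\<^sup>2 - t\<^sup>2) / r\<^sup>2" using r by (simp add: field_simps power2_eq_square)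
      then have "sqrt (1 - (- t / r)\<^sup>2) = sqrt (r\<^sup>2 - t\<^sup>2) / r" using r by (simp add: real_sqrt_divide)
      then show ?thesis unfolding g'_def using r by (simp add: field_simps)
    qed
    ultimately show ?thesis by (simp add: has_field_derivative_at_within)
  qed
  have sub: "((\<lambda>x. g' x *\<^sub>R f (g x)) has_integral (integral {g (-r)..g r} f - integral {g r..g (-r)} f)) {-r..r}"
    by (rule has_integral_substitution_general[of "{-r, r}" "-r" r g 0 1 f g', OF _ _ gsub continuous_on_subset[OF fc] gc gd])
       (use r in auto)
  have g1: "g (-r) = 0" "g r = 1" unfolding g_def using r by auto
  have sub2: "((\<lambda>x. g' x * f (g x)) has_integral integral {0..1} f) {-r..r}"
    using sub unfolding g1 by simp
  have eq: "g' t * f (g t) = Gf \<phi> t / sqrt (r\<^sup>2 - t\<^sup>2)" if t: "t \<in> {-r..r}" for t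
  proof -
    have t1: "-1 \<le> - t / r" "- t / r \<le> 1" using t r by (auto simp: field_simps)
    have "sin (pi * g t - pi / 2) = t / r"
      unfolding g_def using t1 by (simp add: sin_diff)
    then have "r * sin (pi * g t - pi / 2) = t" using r by simp
    then have "f (g t) = \<phi> (artanh t) * (pi / sqrt (1 - t\<^sup>2))"
      unfolding f_def by (simp add: power_mult_distrib[symmetric])
    then show ?thesis unfolding g'_def Gf_def by (simp add: field_simps)
  qed
  have "((\<lambda>t. Gf \<phi> t / sqrt (r\<^sup>2 - t\<^sup>2)) has_integral integral {0..1} f) {-r..r}"
    using sub2 eq by (rule has_integral_eq[rotated]) 
  then show ?thesis using piL by blast
qed

lemma even_fold:
  fixes h :: "real \<Rightarrow> real"
  assumes L: "(h has_integral L) {-r..r}" and ev: "\<And>t. t \<in> {-r..r} \<Longrightarrow> h (-t) = h t" and r: "0 \<le> r"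
  shows "(h has_integral L / 2) {0..r}"
proof -
  have "h integrable_on {0..r}"
    using integrable_subinterval_real[OF has_integral_integrable[OF L]] r by auto
  then have I: "(h has_integral integral {0..r} h) {0..r}" by (rule integrable_integral)
  then have "((\<lambda>x. h (-x)) has_integral integral {0..r} h) {-r..-0}"
    by (subst has_integral_reflect_real)
  then have "((\<lambda>x. h (-x)) has_integral integral {0..r} h) {-r..0}" by simp
  then have I2: "(h has_integral integral {0..r} h) {-r..0}"
    by (rule has_integral_eq[rotated]) (use ev in auto)
  have "(h has_integral integral {0..r} h + integral {0..r} h) {-r..r}"
    by (rule has_integral_combine[OF _ _ I2 I]) (use r in auto)
  from has_integral_unique[OF L this] have "L = 2 * integral {0..r} h" by simp
  then show ?thesis using I by simp
qed

lemma ennreal_mult_cases: "0 \<le> a \<Longrightarrow> (a = 0 \<or> 0 \<le> b) \<Longrightarrow> ennreal a * ennreal b = ennreal (a * b)"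
proof (cases "a = 0")
  case True then show ?thesis by simp
next
  case False
  assume "0 \<le> a" "a = 0 \<or> 0 \<le> b"
  with False show ?thesis by (simp add: ennreal_mult)
qed

lemma nnI:
  fixes f :: "real \<Rightarrow> real"
  assumes "\<And>x. x \<in> \<Omega> \<Longrightarrow> 0 \<le> f x" "(f has_integral I) \<Omega>"
  shows "(\<integral>\<^sup>+ x. ennreal (indicator \<Omega> x * f x) \<partial>lborel) = ennreal I"
proof -
  have "(\<integral>\<^sup>+ x. ennreal (indicator \<Omega> x * f x) \<partial>lborel) = (\<integral>\<^sup>+ x. ennreal (f x) * indicator \<Omega> x \<partial>lborel)"
    by (rule nn_integral_cong) (auto simp: indicator_def)
  also have "\<dots> = ennreal I" by (rule nn_integral_has_integral_lebesgue'[OF assms])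
  finally show ?thesis .
qed

lemma abel:
  fixes G w K :: "real \<Rightarrow> real" and T P W J :: real
  assumes T: "0 < T" and P: "0 \<le> P"
    and Gm: "G \<in> borel_measurable borel" and wm: "w \<in> borel_measurable borel"
    and Gnn: "\<And>t. t \<in> {0..T} \<Longrightarrow> 0 \<le> G t" and wnn: "\<And>r. r \<in> {0..T} \<Longrightarrow> 0 \<le> w r"
    and curve: "\<And>r. r \<in> {0<..T} \<Longrightarrow> \<exists>L. ((\<lambda>t. G t / sqrt (r\<^sup>2 - t\<^sup>2)) has_integral L) {0..r} \<and> P \<le> L"
    and W: "(w has_integral W) {0..T}"
    and Kint: "\<And>t. t \<in> {0..<T} \<Longrightarrow> ((\<lambda>r. w r / sqrt (r\<^sup>2 - t\<^sup>2)) has_integral K t) {t..T}"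
    and Knn: "\<And>t. t \<in> {0..T} \<Longrightarrow> 0 \<le> K t"
    and GK: "((\<lambda>t. G t * K t) has_integral J) {0..T}"
  shows "P * W \<le> J"
proof -
  define a where "a = (\<lambda>r. indicator {0..T} r * w r)"
  define b where "b = (\<lambda>t. indicator {0..T} t * G t)"
  define k where "k = (\<lambda>r t. if 0 \<le> t \<and> t \<le> r then 1 / sqrt (r\<^sup>2 - t\<^sup>2) else (0::real))"
  define F where "F = (\<lambda>r t. ennreal (a r) * ennreal (b t) * ennreal (k r t))"
  have ann: "0 \<le> a r" for r unfolding a_def using wnn by (auto simp: indicator_def)
  have bnn: "0 \<le> b t" for t unfolding b_def using Gnn by (auto simp: indicator_def)
  have knn: "0 \<le> k r t" for r t unfolding k_def by simp
  have meas: "case_prod F \<in> borel_measurable (lborel \<Otimes>\<^sub>M lborel)"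
    unfolding F_def a_def b_def k_def case_prod_unfold
    using Gm wm by measurable
  have Fr: "F r t = ennreal (a r) * ennreal (indicator {0..r} t * (G t / sqrt (r\<^sup>2 - t\<^sup>2)))" for r t
  proof (cases "r \<in> {0..T}")
    case True
    have "b t * k r t = indicator {0..r} t * (G t / sqrt (r\<^sup>2 - t\<^sup>2))"
      using True unfolding b_def k_def indicator_def by auto
    then show ?thesis unfolding F_def using bnn[of t] knn[of r t]
      by (simp add: ennreal_mult[symmetric] mult.assoc)
  next
    case False then have "a r = 0" unfolding a_def by simp
    then show ?thesis unfolding F_def by simp
  qed
  have Ft: "F r t = ennreal (b t) * ennreal (indicator {t..T} r * (w r / sqrt (r\<^sup>2 - t\<^sup>2)))" for r t
  proof (cases "t \<in> {0..T}")
    case True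
    have "a r * k r t = indicator {t..T} r * (w r / sqrt (r\<^sup>2 - t\<^sup>2))"
      using True unfolding a_def k_def indicator_def by auto
    have "F r t = ennreal (b t) * (ennreal (a r) * ennreal (k r t))" unfolding F_def by (simp add: ac_simps)
    also have "ennreal (a r) * ennreal (k r t) = ennreal (a r * k r t)" using ann[of r] knn[of r t] by (simp add: ennreal_mult)
    finally show ?thesis using \<open>a r * k r t = _\<close> by simp
  next
    case False then have "b t = 0" unfolding b_def by simp
    then show ?thesis unfolding F_def by simp
  qed
  have Wnn: "0 \<le> W" by (rule has_integral_nonneg[OF W]) (use wnn in auto)
  have Jnn: "0 \<le> J" by (rule has_integral_nonneg[OF GK]) (use Gnn Knn in auto)
  have "(\<integral>\<^sup>+ r. ennreal (a r) * ennreal P \<partial>lborel) \<le> (\<integral>\<^sup>+ r. (\<integral>\<^sup>+ t. F r t \<partial>lborel) \<partial>lborel)"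
  proof (rule nn_integral_mono_AE)
    show "AE r in lborel. ennreal (a r) * ennreal P \<le> (\<integral>\<^sup>+ t. F r t \<partial>lborel)"
      using AE_lborel_singleton[of 0]
    proof (rule eventually_mono)
      fix r :: real assume r0: "r \<noteq> 0"
      have eq: "(\<integral>\<^sup>+ t. F r t \<partial>lborel) = ennreal (a r) * (\<integral>\<^sup>+ t. ennreal (indicator {0..r} t * (G t / sqrt (r\<^sup>2 - t\<^sup>2))) \<partial>lborel)"
        unfolding Fr by (rule nn_integral_cmult) (use Gm in measurable)
      show "ennreal (a r) * ennreal P \<le> (\<integral>\<^sup>+ t. F r t \<partial>lborel)"
      proof (cases "r \<in> {0..T}")
        case True
        then have "r \<in> {0<..T}" using r0 by auto
        then obtain L where L: "((\<lambda>t. G t / sqrt (r\<^sup>2 - t\<^sup>2)) has_integral L) {0..r}" "P \<le> L"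
          using curve by blast
        have "(\<integral>\<^sup>+ t. ennreal (indicator {0..r} t * (G t / sqrt (r\<^sup>2 - t\<^sup>2))) \<partial>lborel) = ennreal L"
          by (rule nnI[OF _ L(1)]) (use True Gnn in auto)
        then show ?thesis unfolding eq using L(2) by (auto intro!: mult_left_mono ennreal_leI)
      next
        case False then have "a r = 0" unfolding a_def by simp
        then show ?thesis unfolding eq by simp
      qed
    qed
  qed
  also have "\<dots> = (\<integral>\<^sup>+ t. (\<integral>\<^sup>+ r. F r t \<partial>lborel) \<partial>lborel)"
    by (rule lborel_pair.Fubini'[OF meas, symmetric])
  also have "\<dots> \<le> (\<integral>\<^sup>+ t. ennreal (indicator {0..T} t * (G t * K t)) \<partial>lborel)"
  proof (rule nn_integral_mono)
    fix t :: real
    have eq: "(\<integral>\<^sup>+ r. F r t \<partial>lborel) = ennreal (b t) * (\<integral>\<^sup>+ r. ennreal (indicator {t..T} r * (w r / sqrt (r\<^sup>2 - t\<^sup>2))) \<partial>lborel)"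
      unfolding Ft by (rule nn_integral_cmult) (use wm in measurable)
    show "(\<integral>\<^sup>+ r. F r t \<partial>lborel) \<le> ennreal (indicator {0..T} t * (G t * K t))"
    proof (cases "t \<in> {0..T}")
      case True
      have "(\<integral>\<^sup>+ r. ennreal (indicator {t..T} r * (w r / sqrt (r\<^sup>2 - t\<^sup>2))) \<partial>lborel) \<le> ennreal (K t)"
      proof (cases "t = T")
        case True
        have "(\<integral>\<^sup>+ r. ennreal (indicator {t..T} r * (w r / sqrt (r\<^sup>2 - t\<^sup>2))) \<partial>lborel) = ennreal 0"
          by (rule nnI) (use True in auto)
        then show ?thesis by simp
      next
        case False
        with \<open>t \<in> {0..T}\<close> have tt: "t \<in> {0..<T}" by auto
        have "(\<integral>\<^sup>+ r. ennreal (indicator {t..T} r * (w r / sqrt (r\<^sup>2 - t\<^sup>2))) \<partial>lborel) = ennreal (K t)"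
          by (rule nnI[OF _ Kint[OF tt]]) (use tt wnn in auto)
        then show ?thesis by simp
      qed
      then have "(\<integral>\<^sup>+ r. F r t \<partial>lborel) \<le> ennreal (b t) * ennreal (K t)"
        unfolding eq by (rule mult_left_mono) simp
      also have "\<dots> = ennreal (indicator {0..T} t * (G t * K t))"
        using True bnn[of t] Knn[OF True] unfolding b_def by (simp add: ennreal_mult[symmetric] mult.assoc)
      finally show ?thesis .
    next
      case False then have "b t = 0" unfolding b_def by simp
      then show ?thesis unfolding eq by simp
    qed
  qed
  also have "\<dots> = ennreal J"
    by (rule nnI[OF _ GK]) (use Gnn Knn in auto)
  finally have le: "(\<integral>\<^sup>+ r. ennreal (a r) * ennreal P \<partial>lborel) \<le> ennreal J" .
  have "(\<integral>\<^sup>+ r. ennreal (a r) * ennreal P \<partial>lborel) = (\<integral>\<^sup>+ r. ennreal (a r) \<partial>lborel) * ennreal P"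
    by (rule nn_integral_multc) (unfold a_def, use wm in measurable)
  also have "(\<integral>\<^sup>+ r. ennreal (a r) \<partial>lborel) = ennreal W"
    unfolding a_def by (rule nnI[OF _ W]) (use wnn in auto)
  finally have "ennreal (W * P) \<le> ennreal J" using le Wnn P by (simp add: ennreal_mult)
  then show ?thesis using Jnn by (simp add: ennreal_le_iff mult.commute)
qed

lemma K1:
  fixes t T :: real
  assumes tT: "0 \<le> t" "t < T"
  shows "((\<lambda>r. (r / sqrt (T\<^sup>2 - r\<^sup>2)) / sqrt (r\<^sup>2 - t\<^sup>2)) has_integral pi / 2) {t..T}"
proof -
  define d where "d = T\<^sup>2 - t\<^sup>2"
  have d: "d > 0" unfolding d_def using tT by (simp add: power_strict_mono)
  define wf where "wf = (\<lambda>r::real. (2 * r\<^sup>2 - T\<^sup>2 - t\<^sup>2) / d)"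
  define A where "A = (\<lambda>r. arcsin (wf r) / 2)"
  have key: "1 - (wf r)\<^sup>2 = (2 * sqrt (T\<^sup>2 - r\<^sup>2) * sqrt (r\<^sup>2 - t\<^sup>2) / d)\<^sup>2" if r: "r \<in> {t..T}" for r
  proof -
    have a: "0 \<le> T\<^sup>2 - r\<^sup>2" "0 \<le> r\<^sup>2 - t\<^sup>2" using r tT by (auto intro!: power_mono)
    have "(2 * sqrt (T\<^sup>2 - r\<^sup>2) * sqrt (r\<^sup>2 - t\<^sup>2) / d)\<^sup>2 = 4 * (T\<^sup>2 - r\<^sup>2) * (r\<^sup>2 - t\<^sup>2) / d\<^sup>2"
      using a by (simp add: power_mult_distrib power_divide)
    also have "\<dots> = (d\<^sup>2 - (2 * r\<^sup>2 - T\<^sup>2 - t\<^sup>2)\<^sup>2) / d\<^sup>2"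
    proof -
      have "d\<^sup>2 - (2 * r\<^sup>2 - T\<^sup>2 - t\<^sup>2)\<^sup>2 = 4 * (T\<^sup>2 - r\<^sup>2) * (r\<^sup>2 - t\<^sup>2)"
        unfolding d_def by algebra
      then show ?thesis by simp
    qed
    also have "\<dots> = 1 - (wf r)\<^sup>2"
    proof -
      have g: "\<And>x. 1 - (x / d)\<^sup>2 = (d\<^sup>2 - x\<^sup>2) / d\<^sup>2" using d by (simp add: power_divide field_simps)
      show ?thesis unfolding wf_def g ..
    qed

    finally show ?thesis by simp
  qed
  have wb: "-1 \<le> wf r \<and> wf r \<le> 1" if r: "r \<in> {t..T}" for r
  proof -
    have "0 \<le> 1 - (wf r)\<^sup>2" using key[OF r] by simp
    then have "(wf r)\<^sup>2 \<le> 1\<^sup>2" by simp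
    then show ?thesis using abs_le_square_iff[of "wf r" 1] by (simp add: abs_le_iff)
  qed
  have cont: "continuous_on {t..T} A"
    unfolding A_def wf_def using wb d unfolding wf_def
    by (auto intro!: continuous_intros)
  have der: "(A has_vector_derivative (r / sqrt (T\<^sup>2 - r\<^sup>2)) / sqrt (r\<^sup>2 - t\<^sup>2)) (at r)" if r: "r \<in> {t<..<T}" for r
  proof -
    have r': "r \<in> {t..T}" using r by auto
    have pos: "0 < T\<^sup>2 - r\<^sup>2" "0 < r\<^sup>2 - t\<^sup>2" using r tT by (auto intro!: power_strict_mono)
    have S: "sqrt (1 - (wf r)\<^sup>2) = 2 * sqrt (T\<^sup>2 - r\<^sup>2) * sqrt (r\<^sup>2 - t\<^sup>2) / d"
      unfolding key[OF r'] real_sqrt_abs using d pos by simp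
    have S0: "0 < sqrt (1 - (wf r)\<^sup>2)" unfolding S using d pos by simp
    have w1: "-1 < wf r" "wf r < 1"
    proof -
      have "(wf r)\<^sup>2 < 1" using S0 by simp
      then have "\<bar>wf r\<bar> < 1" by (simp add: abs_square_less_1)
      then show "-1 < wf r" "wf r < 1" by auto
    qed
    have dw: "(wf has_real_derivative 4 * r / d) (at r)"
    proof -
      have "((\<lambda>r. 2 * r\<^sup>2 - T\<^sup>2 - t\<^sup>2) has_real_derivative 4 * r) (at r)"
        by (auto intro!: derivative_eq_intros)
      then show ?thesis unfolding wf_def[abs_def] by (rule DERIV_cdivide)
    qed
    have "(A has_real_derivative inverse (sqrt (1 - (wf r)\<^sup>2)) * (4 * r / d) / 2) (at r)"
      unfolding A_def by (rule DERIV_cdivide[OF DERIV_chain2[OF DERIV_arcsin[OF w1] dw]])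
    moreover have "inverse (sqrt (1 - (wf r)\<^sup>2)) * (4 * r / d) / 2 = (r / sqrt (T\<^sup>2 - r\<^sup>2)) / sqrt (r\<^sup>2 - t\<^sup>2)"
    proof -
      have g: "\<And>x y. x > 0 \<Longrightarrow> y > 0 \<Longrightarrow> inverse (2 * x * y / d) * (4 * r / d) / 2 = (r / x) / y"
        using d by (simp add: field_simps)
      show ?thesis unfolding S using pos by (intro g) auto
    qed
    ultimately show ?thesis by (simp add: has_real_derivative_iff_has_vector_derivative)
  qed
  have "((\<lambda>r. (r / sqrt (T\<^sup>2 - r\<^sup>2)) / sqrt (r\<^sup>2 - t\<^sup>2)) has_integral A T - A t) {t..T}"
    by (rule fundamental_theorem_of_calculus_interior[OF _ cont der]) (use tT in auto)
  moreover have "wf T = 1" "wf t = -1"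
  proof -
    have "2 * T\<^sup>2 - T\<^sup>2 - t\<^sup>2 = d" "2 * t\<^sup>2 - T\<^sup>2 - t\<^sup>2 = - d" unfolding d_def by simp_all
    then show "wf T = 1" "wf t = -1" unfolding wf_def using d by simp_all
  qed
  ultimately show ?thesis unfolding A_def by simp
qed


lemma K2:
  fixes t T :: real
  assumes tT: "0 \<le> t" "t < T" "T < 1"
  shows "((\<lambda>r. (r / ((1 - r\<^sup>2) * sqrt (T\<^sup>2 - r\<^sup>2))) / sqrt (r\<^sup>2 - t\<^sup>2)) has_integral
            pi / (2 * (sqrt (1 - T\<^sup>2) * sqrt (1 - t\<^sup>2)))) {t..T}"
proof -
  define p where "p = 1 - T\<^sup>2"
  define q where "q = 1 - t\<^sup>2"
  have T2: "T\<^sup>2 < 1" using tT by (simp add: power_less_one_iff)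
  have t2: "t\<^sup>2 < T\<^sup>2" using tT by (simp add: power_strict_mono)
  have p: "0 < p" "p < q" unfolding p_def q_def using T2 t2 by auto
  define m where "m = sqrt p * sqrt q"
  have m: "0 < m" "m\<^sup>2 = p * q" unfolding m_def using p by (auto simp: power_mult_distrib)
  define wf where "wf = (\<lambda>r::real. ((p + q) - 2 * p * q / (1 - r\<^sup>2)) / (q - p))"
  define A where "A = (\<lambda>r. - arcsin (wf r) / (2 * m))"
  have zr: "p \<le> 1 - r\<^sup>2" "1 - r\<^sup>2 \<le> q" if r: "r \<in> {t..T}" for r
    unfolding p_def q_def using r tT by (auto intro!: power_mono)
  have key: "1 - (wf r)\<^sup>2 = (2 * m * sqrt (r\<^sup>2 - t\<^sup>2) * sqrt (T\<^sup>2 - r\<^sup>2) / ((1 - r\<^sup>2) * (q - p)))\<^sup>2"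
    if r: "r \<in> {t..T}" for r
  proof -
    define z where "z = 1 - r\<^sup>2"
    have z: "0 < z" "p \<le> z" "z \<le> q" using zr[OF r] p unfolding z_def by auto
    have a: "r\<^sup>2 - t\<^sup>2 = q - z" "T\<^sup>2 - r\<^sup>2 = z - p" unfolding z_def p_def q_def by auto
    have "(2 * m * sqrt (r\<^sup>2 - t\<^sup>2) * sqrt (T\<^sup>2 - r\<^sup>2) / ((1 - r\<^sup>2) * (q - p)))\<^sup>2
        = 4 * (p * q) * (q - z) * (z - p) / (z * (q - p))\<^sup>2"
      unfolding a z_def[symmetric] using z by (simp add: power_mult_distrib power_divide m(2))
    also have "\<dots> = ((z * (q - p))\<^sup>2 - ((p + q) * z - 2 * p * q)\<^sup>2) / (z * (q - p))\<^sup>2"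
    proof -
      have "(z * (q - p))\<^sup>2 - ((p + q) * z - 2 * p * q)\<^sup>2 = 4 * (p * q) * (q - z) * (z - p)" by algebra
      then show ?thesis by simp
    qed
    also have "\<dots> = 1 - (((p + q) * z - 2 * p * q) / (z * (q - p)))\<^sup>2"
    proof -
      have nz: "z * (q - p) \<noteq> 0" using z p by auto
      have g: "\<And>x y. y \<noteq> 0 \<Longrightarrow> (y\<^sup>2 - x\<^sup>2) / y\<^sup>2 = 1 - (x / (y::real))\<^sup>2" by (simp add: power_divide diff_divide_distrib)
      show ?thesis by (rule g[OF nz])
    qed
    also have "((p + q) * z - 2 * p * q) / (z * (q - p)) = wf r"
    proof -
      have "wf r = ((p + q) - 2 * p * q / z) / (q - p)" unfolding wf_def z_def ..
      also have "(p + q) - 2 * p * q / z = ((p + q) * z - 2 * p * q) / z" using z by (simp add: field_simps)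
      finally show ?thesis by simp
    qed
    finally show ?thesis by simp
  qed
  have wb: "-1 \<le> wf r \<and> wf r \<le> 1" if r: "r \<in> {t..T}" for r
  proof -
    have "0 \<le> 1 - (wf r)\<^sup>2" using key[OF r] by simp
    then have "(wf r)\<^sup>2 \<le> 1\<^sup>2" by simp
    then show ?thesis using abs_le_square_iff[of "wf r" 1] by (simp add: abs_le_iff)
  qed
  have nz1: "1 - r\<^sup>2 \<noteq> 0" if r: "r \<in> {t..T}" for r using zr[OF r] p by auto
  have cont: "continuous_on {t..T} A"
    unfolding A_def using wb unfolding wf_def using nz1 p m
    by (auto intro!: continuous_intros)
  have der: "(A has_vector_derivative (r / ((1 - r\<^sup>2) * sqrt (T\<^sup>2 - r\<^sup>2))) / sqrt (r\<^sup>2 - t\<^sup>2)) (at r)"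
    if r: "r \<in> {t<..<T}" for r
  proof -
    have r': "r \<in> {t..T}" using r by auto
    have pos: "0 < T\<^sup>2 - r\<^sup>2" "0 < r\<^sup>2 - t\<^sup>2" using r tT by (auto intro!: power_strict_mono)
    have z: "0 < 1 - r\<^sup>2" using zr[OF r'] p by auto
    have S: "sqrt (1 - (wf r)\<^sup>2) = 2 * m * sqrt (r\<^sup>2 - t\<^sup>2) * sqrt (T\<^sup>2 - r\<^sup>2) / ((1 - r\<^sup>2) * (q - p))"
      unfolding key[OF r'] real_sqrt_abs using z pos p m by simp
    have S0: "0 < sqrt (1 - (wf r)\<^sup>2)" unfolding S using z pos p m by simp
    have w1: "-1 < wf r" "wf r < 1"
    proof -
      have "(wf r)\<^sup>2 < 1" using S0 by simp
      then have "\<bar>wf r\<bar> < 1" by (simp add: abs_square_less_1)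
      then show "-1 < wf r" "wf r < 1" by auto
    qed
    have dw: "(wf has_real_derivative (- (4 * p * q * r) / ((1 - r\<^sup>2) * (1 - r\<^sup>2))) / (q - p)) (at r)"
    proof -
      have dz: "((\<lambda>r. 1 - r\<^sup>2) has_real_derivative - (2 * r)) (at r)"
        by (auto intro!: derivative_eq_intros)
      have "((\<lambda>r. 2 * p * q / (1 - r\<^sup>2)) has_real_derivative (0 * (1 - r\<^sup>2) - 2 * p * q * - (2 * r)) / ((1 - r\<^sup>2) * (1 - r\<^sup>2))) (at r)"
        by (rule DERIV_divide[OF DERIV_const dz]) (use z in simp)
      then have "((\<lambda>r. 2 * p * q / (1 - r\<^sup>2)) has_real_derivative (4 * p * q * r) / ((1 - r\<^sup>2) * (1 - r\<^sup>2))) (at r)"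
        by (simp add: mult.assoc)
      from DERIV_cdivide[OF DERIV_diff[OF DERIV_const[of "p + q"] this], where c="q - p"]
      show ?thesis unfolding wf_def[abs_def] by simp
    qed
    have "(A has_real_derivative - (inverse (sqrt (1 - (wf r)\<^sup>2)) * ((- (4 * p * q * r) / ((1 - r\<^sup>2) * (1 - r\<^sup>2))) / (q - p))) / (2 * m)) (at r)"
      unfolding A_def by (rule DERIV_cdivide[OF DERIV_minus[OF DERIV_chain2[OF DERIV_arcsin[OF w1] dw]]])
    moreover have "- (inverse (sqrt (1 - (wf r)\<^sup>2)) * ((- (4 * p * q * r) / ((1 - r\<^sup>2) * (1 - r\<^sup>2))) / (q - p))) / (2 * m)
        = (r / ((1 - r\<^sup>2) * sqrt (T\<^sup>2 - r\<^sup>2))) / sqrt (r\<^sup>2 - t\<^sup>2)"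
    proof -
      have g: "\<And>x y z. x > 0 \<Longrightarrow> y > 0 \<Longrightarrow> z > 0 \<Longrightarrow>
        - (inverse (2 * m * x * y / (z * (q - p))) * ((- (4 * (m\<^sup>2) * r) / (z * z)) / (q - p))) / (2 * m)
        = (r / (z * y)) / x"
        using m(1) p by (simp add: field_simps power2_eq_square)
      show ?thesis unfolding S using g[of "sqrt (r\<^sup>2 - t\<^sup>2)" "sqrt (T\<^sup>2 - r\<^sup>2)" "1 - r\<^sup>2"] pos z
        by (simp add: m(2) mult.assoc)
    qed
    ultimately show ?thesis by (simp add: has_real_derivative_iff_has_vector_derivative)
  qed
  have "((\<lambda>r. (r / ((1 - r\<^sup>2) * sqrt (T\<^sup>2 - r\<^sup>2))) / sqrt (r\<^sup>2 - t\<^sup>2)) has_integral A T - A t) {t..T}"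
    by (rule fundamental_theorem_of_calculus_interior[OF _ cont der]) (use tT in auto)
  moreover have "wf T = -1" "wf t = 1"
  proof -
    have zT: "1 - T\<^sup>2 = p" "1 - t\<^sup>2 = q" unfolding p_def q_def by auto
    have "(p + q) - 2 * p * q / p = -(q - p)" "(p + q) - 2 * p * q / q = q - p" using p by (auto simp: field_simps)
    then show "wf T = -1" "wf t = 1" unfolding wf_def zT using p by (auto simp: divide_eq_eq)
  qed
  then have "A T - A t = pi / (2 * m)" unfolding A_def by (simp add: field_simps)
  also have "\<dots> = pi / (2 * (sqrt (1 - T\<^sup>2) * sqrt (1 - t\<^sup>2)))" unfolding m_def p_def q_def ..
  finally show ?thesis using \<open>(_ has_integral A T - A t) _\<close> by simp
qed

lemma W1:
  fixes T :: real assumes T: "0 < T"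
  shows "((\<lambda>r. r / sqrt (T\<^sup>2 - r\<^sup>2)) has_integral T) {0..T}"
proof -
  define F where "F = (\<lambda>r::real. - sqrt (T\<^sup>2 - r\<^sup>2))"
  have cont: "continuous_on {0..T} F" unfolding F_def by (auto intro!: continuous_intros)
  have der: "(F has_vector_derivative r / sqrt (T\<^sup>2 - r\<^sup>2)) (at r)" if r: "r \<in> {0<..<T}" for r
  proof -
    have pos: "0 < T\<^sup>2 - r\<^sup>2" using r by (auto intro!: power_strict_mono)
    have "(F has_real_derivative - (inverse (sqrt (T\<^sup>2 - r\<^sup>2)) / 2 * (- (2 * r)))) (at r)"
    proof -
      have d: "((\<lambda>r. T\<^sup>2 - r\<^sup>2) has_real_derivative - (2 * r)) (at r)" by (auto intro!: derivative_eq_intros)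
      show ?thesis unfolding F_def by (rule DERIV_minus[OF DERIV_chain2[OF DERIV_real_sqrt[OF pos] d]])
    qed
    moreover have "- (inverse (sqrt (T\<^sup>2 - r\<^sup>2)) / 2 * (- (2 * r))) = r / sqrt (T\<^sup>2 - r\<^sup>2)"
      by (simp add: inverse_eq_divide)
    ultimately show ?thesis by (simp add: has_real_derivative_iff_has_vector_derivative)
  qed
  have "((\<lambda>r. r / sqrt (T\<^sup>2 - r\<^sup>2)) has_integral F T - F 0) {0..T}"
    by (rule fundamental_theorem_of_calculus_interior[OF _ cont der]) (use T in auto)
  then show ?thesis unfolding F_def using T by simp
qed

lemma Wmid:
  fixes T :: real assumes T: "0 < T" "T < 1"
  shows "((\<lambda>r. r * sqrt (T\<^sup>2 - r\<^sup>2) / (1 - r\<^sup>2)) has_integral T - sqrt (1 - T\<^sup>2) * arctan (T / sqrt (1 - T\<^sup>2))) {0..T}"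
proof -
  define c where "c = sqrt (1 - T\<^sup>2)"
  have T2: "T\<^sup>2 < 1" using T by (simp add: power_less_one_iff)
  have c: "0 < c" "c\<^sup>2 = 1 - T\<^sup>2" unfolding c_def using T2 by auto
  define F where "F = (\<lambda>r::real. - sqrt (T\<^sup>2 - r\<^sup>2) + c * arctan (sqrt (T\<^sup>2 - r\<^sup>2) / c))"
  have cont: "continuous_on {0..T} F" unfolding F_def using c by (auto intro!: continuous_intros)
  have der: "(F has_vector_derivative r * sqrt (T\<^sup>2 - r\<^sup>2) / (1 - r\<^sup>2)) (at r)" if r: "r \<in> {0<..<T}" for r
  proof -
    have pos: "0 < T\<^sup>2 - r\<^sup>2" using r by (auto intro!: power_strict_mono)
    have om: "0 < sqrt (T\<^sup>2 - r\<^sup>2)" "(sqrt (T\<^sup>2 - r\<^sup>2))\<^sup>2 = T\<^sup>2 - r\<^sup>2" using pos by auto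
    have d: "((\<lambda>r. T\<^sup>2 - r\<^sup>2) has_real_derivative - (2 * r)) (at r)" by (auto intro!: derivative_eq_intros)
    have dw: "((\<lambda>r. sqrt (T\<^sup>2 - r\<^sup>2)) has_real_derivative inverse (sqrt (T\<^sup>2 - r\<^sup>2)) / 2 * (- (2 * r))) (at r)"
      by (rule DERIV_chain2[OF DERIV_real_sqrt[OF pos] d])
    have e: "inverse (sqrt (T\<^sup>2 - r\<^sup>2)) / 2 * (- (2 * r)) = - r / sqrt (T\<^sup>2 - r\<^sup>2)"
      by (simp add: inverse_eq_divide)
    have dw': "((\<lambda>r. sqrt (T\<^sup>2 - r\<^sup>2)) has_real_derivative - r / sqrt (T\<^sup>2 - r\<^sup>2)) (at r)"
      using dw unfolding e .
    have "(F has_real_derivative - (- r / sqrt (T\<^sup>2 - r\<^sup>2)) + c * (inverse (1 + (sqrt (T\<^sup>2 - r\<^sup>2) / c)\<^sup>2) * ((- r / sqrt (T\<^sup>2 - r\<^sup>2)) / c))) (at r)"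
      unfolding F_def
      by (rule DERIV_add[OF DERIV_minus[OF dw'] DERIV_cmult[OF DERIV_chain2[OF DERIV_arctan DERIV_cdivide[OF dw']]]])
    moreover have "- (- r / sqrt (T\<^sup>2 - r\<^sup>2)) + c * (inverse (1 + (sqrt (T\<^sup>2 - r\<^sup>2) / c)\<^sup>2) * ((- r / sqrt (T\<^sup>2 - r\<^sup>2)) / c)) = r * sqrt (T\<^sup>2 - r\<^sup>2) / (1 - r\<^sup>2)"
    proof -
      have g: "- (- r / x) + c * (inverse (1 + (x / c)\<^sup>2) * ((- r / x) / c)) = r * x / (c\<^sup>2 + x\<^sup>2)"
        if x: "x > 0" for x
      proof -
        have "c * c + x * x > 0" using c(1) x by (simp add: add_pos_pos)
        moreover have "c * (c * x) + x * (x * x) > 0" using c(1) x by (simp add: add_pos_pos)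
        ultimately show ?thesis using x c(1) by (simp add: field_simps power2_eq_square)
      qed
      have eq: "c\<^sup>2 + (sqrt (T\<^sup>2 - r\<^sup>2))\<^sup>2 = 1 - r\<^sup>2" unfolding c(2) om(2) by simp
      show ?thesis unfolding g[OF om(1)] eq ..
    qed
    ultimately show ?thesis by (simp add: has_real_derivative_iff_has_vector_derivative)
  qed
  have "((\<lambda>r. r * sqrt (T\<^sup>2 - r\<^sup>2) / (1 - r\<^sup>2)) has_integral F T - F 0) {0..T}"
    by (rule fundamental_theorem_of_calculus_interior[OF _ cont der]) (use T in auto)
  then show ?thesis unfolding F_def c_def using T by simp
qed

lemma Kmid:
  fixes t T :: real
  assumes tT: "0 \<le> t" "t < T" "T < 1"
  shows "((\<lambda>r. (r * sqrt (T\<^sup>2 - r\<^sup>2) / (1 - r\<^sup>2)) / sqrt (r\<^sup>2 - t\<^sup>2)) has_integral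
            pi / 2 * (1 - sqrt (1 - T\<^sup>2) / sqrt (1 - t\<^sup>2))) {t..T}"
proof -
  define c where "c = sqrt (1 - T\<^sup>2)"
  have T2: "T\<^sup>2 < 1" using tT by (simp add: power_less_one_iff)
  have c: "0 < c" "c\<^sup>2 = 1 - T\<^sup>2" unfolding c_def using T2 by auto
  have t2: "0 < 1 - t\<^sup>2" using tT T2 by (smt (verit) power_mono)
  have "((\<lambda>r. (r / sqrt (T\<^sup>2 - r\<^sup>2)) / sqrt (r\<^sup>2 - t\<^sup>2) - c\<^sup>2 * ((r / ((1 - r\<^sup>2) * sqrt (T\<^sup>2 - r\<^sup>2))) / sqrt (r\<^sup>2 - t\<^sup>2)))
      has_integral pi / 2 - c\<^sup>2 * (pi / (2 * (c * sqrt (1 - t\<^sup>2))))) {t..T}"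
    using has_integral_diff[OF K1[OF tT(1,2)] has_integral_mult_right[OF K2[OF tT]]] unfolding c_def .
  moreover have "pi / 2 - c\<^sup>2 * (pi / (2 * (c * sqrt (1 - t\<^sup>2)))) = pi / 2 * (1 - c / sqrt (1 - t\<^sup>2))"
  proof -
    have "c\<^sup>2 * (pi / (2 * (c * sqrt (1 - t\<^sup>2)))) = pi / 2 * (c / sqrt (1 - t\<^sup>2))"
      using c(1) by (simp add: power2_eq_square)
    then show ?thesis by (simp add: right_diff_distrib)
  qed
  moreover have "(r / sqrt (T\<^sup>2 - r\<^sup>2)) / sqrt (r\<^sup>2 - t\<^sup>2) - c\<^sup>2 * ((r / ((1 - r\<^sup>2) * sqrt (T\<^sup>2 - r\<^sup>2))) / sqrt (r\<^sup>2 - t\<^sup>2))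
      = (r * sqrt (T\<^sup>2 - r\<^sup>2) / (1 - r\<^sup>2)) / sqrt (r\<^sup>2 - t\<^sup>2)" if r: "r \<in> {t..T}" for r
  proof (cases "r = T")
    case True then show ?thesis by simp
  next
    case False
    define a where "a = sqrt (T\<^sup>2 - r\<^sup>2)"
    have a: "0 < a" "a\<^sup>2 = T\<^sup>2 - r\<^sup>2" unfolding a_def using r tT False by (auto intro!: power_strict_mono)
    have "r\<^sup>2 \<le> T\<^sup>2" using r tT by (auto intro!: power_mono)
    then have z: "0 < 1 - r\<^sup>2" using T2 by simp
    have cz: "c\<^sup>2 = (1 - r\<^sup>2) - a\<^sup>2" using c a by simp
    have g0: "r / a - ((1 - r\<^sup>2) - a\<^sup>2) * (r / ((1 - r\<^sup>2) * a)) = r * a / (1 - r\<^sup>2)"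
      using a(1) z by (simp add: field_simps power2_eq_square)
    have g: "\<And>b. (r / a) / b - ((1 - r\<^sup>2) - a\<^sup>2) * ((r / ((1 - r\<^sup>2) * a)) / b) = (r * a / (1 - r\<^sup>2)) / b"
      using g0 by (metis diff_divide_distrib times_divide_eq_right)
    show ?thesis using g unfolding a_def[symmetric] cz .
  qed
  ultimately show ?thesis unfolding c_def[symmetric]
    by (metis (no_types, lifting) has_integral_eq)
qed

lemma phi0_cont: "continuous_on S phi0"
  unfolding phi0_def[abs_def]
  by (auto intro!: continuous_intros simp: add_pos_pos less_imp_neq[symmetric])

lemma phi0_pos: "phi0 y > 0"
  unfolding phi0_def by (simp add: add_pos_pos)

lemma tanh_bound: "0 \<le> a \<Longrightarrow> 0 \<le> tanh a \<and> tanh a < (1::real)"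
  using tanh_real_lt_1 by auto

lemma artanh_mono: assumes "0 \<le> t" "t \<le> u" "u < (1::real)" shows "0 \<le> artanh t \<and> artanh t \<le> artanh u"
proof -
  have "1 \<le> (1 + t) / (1 - t)" using assms by (simp add: field_simps)
  moreover have "(1 + t) / (1 - t) \<le> (1 + u) / (1 - u)" using assms
    by (simp add: frac_le_eq divide_le_eq field_simps mult_mono) 
  ultimately show ?thesis unfolding artanh_def by auto
qed

lemma conv:
  fixes f :: "real \<Rightarrow> real" and a :: real
  assumes a: "0 \<le> a" and cont: "continuous_on {0..a} f"
  shows "((\<lambda>t. f (artanh t) / (1 - t\<^sup>2)) has_integral integral {0..a} f) {0..tanh a}"
proof -
  have tb: "0 \<le> tanh a" "tanh a < 1" using tanh_bound[OF a] by auto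
  have sub: "artanh ` {0..tanh a} \<subseteq> {0..a}"
    using artanh_mono[OF _ _ tb(2)] artanh_tanh_real[of a] by fastforce
  have gc: "continuous_on {0..tanh a} artanh"
    by (rule continuous_on_artanh) (use tb in auto)
  have gd: "(artanh has_field_derivative 1 / (1 - x\<^sup>2)) (at x within {0..tanh a})" if "x \<in> {0..tanh a} - {}" for x
    by (rule artanh_real_has_field_derivative) (use that tb in auto)
  have "((\<lambda>x. (1 / (1 - x\<^sup>2)) *\<^sub>R f (artanh x)) has_integral
          integral {artanh 0..artanh (tanh a)} f - integral {artanh (tanh a)..artanh 0} f) {0..tanh a}"
    by (rule has_integral_substitution_general[OF _ tb(1) sub cont gc gd]) auto
  moreover have "integral {a..0} f = 0" using a by (cases "a = 0") auto
  ultimately show ?thesis by (simp add: artanh_tanh_real)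
qed

lemma phi0_artanh:
  assumes t: "-1 < t" "t < (1::real)"
  shows "phi0 (artanh t) = sqrt (1 - t\<^sup>2)"
proof -
  define x where "x = (1 + t) / (1 - t)"
  have x: "0 < x" unfolding x_def using t by auto
  have e1: "exp (artanh t) = sqrt x"
    unfolding artanh_def x_def[symmetric] using x by (simp add: powr_half_sqrt[symmetric] powr_def)
  have e2: "exp (2 * artanh t) = x"
    unfolding artanh_def x_def[symmetric] using x by simp
  have "phi0 (artanh t) = 2 * sqrt x / (1 + x)" unfolding phi0_def e1 e2 ..
  also have "1 + x = 2 / (1 - t)" unfolding x_def using t by (simp add: field_simps)
  also have "2 * sqrt x / (2 / (1 - t)) = sqrt x * (1 - t)" using t by simp
  also have "\<dots> = sqrt x * sqrt ((1 - t)\<^sup>2)" using t by simp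
  also have "\<dots> = sqrt (x * (1 - t)\<^sup>2)" by (simp add: real_sqrt_mult)
  also have "x * (1 - t)\<^sup>2 = 1 - t\<^sup>2" unfolding x_def using t by (simp add: power2_eq_square field_simps)
  finally show ?thesis .
qed

lemma curve_half:
  fixes \<phi> :: "real \<Rightarrow> real" and r :: real
  assumes len: "\<And>\<gamma> l. noncontr_loop \<beta> \<gamma> \<Longrightarrow> conf_length \<phi> \<gamma> l \<Longrightarrow> pi \<le> l"
    and cont: "continuous_on UNIV \<phi>" and ev: "\<And>y. \<phi> (- y) = \<phi> y" and r: "0 < r" "r < 1"
  shows "\<exists>L. ((\<lambda>t. Gf \<phi> t / sqrt (r\<^sup>2 - t\<^sup>2)) has_integral L) {0..r} \<and> pi / 2 \<le> L"
proof -
  have "\<exists>L. ((\<lambda>t. Gf \<phi> t / sqrt (r\<^sup>2 - t\<^sup>2)) has_integral L) {-r..r} \<and> pi \<le> L"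
    by (rule curve_int[where \<beta>=\<beta>, OF _ cont r]) (fact len)
  then obtain L where L: "((\<lambda>t. Gf \<phi> t / sqrt (r\<^sup>2 - t\<^sup>2)) has_integral L) {-r..r}" "pi \<le> L"
    by blast
  have "((\<lambda>t. Gf \<phi> t / sqrt (r\<^sup>2 - t\<^sup>2)) has_integral L / 2) {0..r}"
  proof (rule even_fold[OF L(1)])
    fix t assume t: "t \<in> {-r..r}"
    then have "\<bar>t\<bar> < 1" using r by auto
    then show "Gf \<phi> (- t) / sqrt (r\<^sup>2 - (- t)\<^sup>2) = Gf \<phi> t / sqrt (r\<^sup>2 - t\<^sup>2)"
      unfolding Gf_def by (simp add: ev)
  qed (use r in auto)
  then show ?thesis using L(2) by (intro exI[of _ "L/2"]) auto
qed

lemma Gf_meas: "continuous_on UNIV \<phi> \<Longrightarrow> Gf \<phi> \<in> borel_measurable borel"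
proof -
  assume c: "continuous_on UNIV \<phi>"
  note [measurable] = borel_measurable_continuous_onI[OF c]
  show ?thesis unfolding Gf_def[abs_def] artanh_def[abs_def] by measurable
qed

lemma Gf_cont:
  assumes c: "continuous_on UNIV \<phi>" and T: "0 \<le> T" "T < 1"
  shows "continuous_on {0..T} (Gf \<phi>)"
proof -
  have pos: "0 < 1 - t\<^sup>2" if "t \<in> {0..T}" for t :: real
  proof -
    have "t\<^sup>2 \<le> T\<^sup>2" using that by (auto intro!: power_mono)
    moreover have "T\<^sup>2 < 1" using T by (simp add: power_less_one_iff)
    ultimately show ?thesis by simp
  qed
  have a: "continuous_on {0..T} artanh" by (rule continuous_on_artanh) (use T in auto)
  have b: "continuous_on {0..T} (\<lambda>t. \<phi> (artanh t))"
    by (rule continuous_on_compose2[OF c a]) auto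
  have d: "continuous_on {0..T} (\<lambda>t::real. sqrt (1 - t\<^sup>2))" by (intro continuous_intros)
  show ?thesis unfolding Gf_def[abs_def]
    by (rule continuous_on_divide[OF b d]) (use pos in force)
qed

lemma sq_lt1: "0 \<le> t \<Longrightarrow> t \<le> T \<Longrightarrow> T < 1 \<Longrightarrow> 0 < 1 - (t::real)\<^sup>2"
proof -
  assume a: "0 \<le> t" "t \<le> T" "T < 1"
  have "t\<^sup>2 \<le> T\<^sup>2" using a by (auto intro!: power_mono)
  moreover have "T\<^sup>2 < 1" using a by (simp add: power_less_one_iff)
  ultimately show ?thesis by simp
qed

lemma Gf_nn: "(\<And>y. 0 < \<phi> y) \<Longrightarrow> 0 < 1 - t\<^sup>2 \<Longrightarrow> 0 \<le> Gf \<phi> t"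
  unfolding Gf_def by (simp add: less_imp_le)

lemma R1:
  fixes \<phi> :: "real \<Rightarrow> real" and T :: real
  assumes len: "\<And>\<gamma> l. noncontr_loop \<beta> \<gamma> \<Longrightarrow> conf_length \<phi> \<gamma> l \<Longrightarrow> pi \<le> l"
    and cont: "continuous_on UNIV \<phi>" and pos: "\<And>y. 0 < \<phi> y" and ev: "\<And>y. \<phi> (- y) = \<phi> y"
    and T: "0 < T" "T < 1"
  shows "T \<le> integral {0..T} (Gf \<phi>)"
proof -
  have Gi: "Gf \<phi> integrable_on {0..T}"
    by (rule integrable_continuous_real[OF Gf_cont[OF cont]]) (use T in auto)
  have GK: "((\<lambda>t. Gf \<phi> t * (pi / 2)) has_integral integral {0..T} (Gf \<phi>) * (pi / 2)) {0..T}"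
    by (rule has_integral_mult_left[OF integrable_integral[OF Gi]])
  have "pi / 2 * T \<le> integral {0..T} (Gf \<phi>) * (pi / 2)"
  proof (rule abel[where G = "Gf \<phi>" and w = "\<lambda>r. r / sqrt (T\<^sup>2 - r\<^sup>2)" and K = "\<lambda>t. pi / 2", OF T(1) _ Gf_meas[OF cont] _ _ _ _ W1[OF T(1)] K1 _ GK])
    show "(\<lambda>r. r / sqrt (T\<^sup>2 - r\<^sup>2)) \<in> borel_measurable borel" by measurable
    show "\<And>t. t \<in> {0..T} \<Longrightarrow> 0 \<le> Gf \<phi> t" using Gf_nn[OF pos sq_lt1] T by auto
    show "\<And>r. r \<in> {0..T} \<Longrightarrow> 0 \<le> r / sqrt (T\<^sup>2 - r\<^sup>2)"
      by (auto intro!: divide_nonneg_nonneg power_mono)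
    show "\<And>r. r \<in> {0<..T} \<Longrightarrow> \<exists>L. ((\<lambda>t. Gf \<phi> t / sqrt (r\<^sup>2 - t\<^sup>2)) has_integral L) {0..r} \<and> pi / 2 \<le> L"
      using curve_half[OF len cont ev] T by auto
  qed auto
  then show ?thesis by simp
qed


lemma R2:
  fixes \<phi> :: "real \<Rightarrow> real" and T :: real
  assumes len: "\<And>\<gamma> l. noncontr_loop \<beta> \<gamma> \<Longrightarrow> conf_length \<phi> \<gamma> l \<Longrightarrow> pi \<le> l"
    and cont: "continuous_on UNIV \<phi>" and pos: "\<And>y. 0 < \<phi> y" and ev: "\<And>y. \<phi> (- y) = \<phi> y"
    and T: "0 < T" "T < 1"
  shows "T - sqrt (1 - T\<^sup>2) * arctan (T / sqrt (1 - T\<^sup>2))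
          \<le> integral {0..T} (\<lambda>t. Gf \<phi> t * (1 - sqrt (1 - T\<^sup>2) / sqrt (1 - t\<^sup>2)))"
proof -
  define c where "c = sqrt (1 - T\<^sup>2)"
  define h where "h = (\<lambda>t. Gf \<phi> t * (1 - c / sqrt (1 - t\<^sup>2)))"
  have hc: "continuous_on {0..T} h"
    unfolding h_def using sq_lt1[of _ T] T
    by (intro continuous_intros Gf_cont[OF cont]) force+
  have Gi: "h integrable_on {0..T}"
    by (rule integrable_continuous_real[OF hc])
  have GK0: "((\<lambda>t. h t * (pi / 2)) has_integral integral {0..T} h * (pi / 2)) {0..T}"
    by (rule has_integral_mult_left[OF integrable_integral[OF Gi]])
  have GK: "((\<lambda>t. Gf \<phi> t * (pi / 2 * (1 - c / sqrt (1 - t\<^sup>2)))) has_integral integral {0..T} h * (pi / 2)) {0..T}"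
    using GK0 by (rule has_integral_eq[rotated]) (simp add: h_def)
  have cle: "c \<le> sqrt (1 - t\<^sup>2)" if "t \<in> {0..T}" for t
    unfolding c_def using that by (auto intro!: power_mono)
  have "pi / 2 * (T - c * arctan (T / c)) \<le> integral {0..T} h * (pi / 2)"
  proof (rule abel[where G = "Gf \<phi>" and w = "\<lambda>r. r * sqrt (T\<^sup>2 - r\<^sup>2) / (1 - r\<^sup>2)"
        and K = "\<lambda>t. pi / 2 * (1 - c / sqrt (1 - t\<^sup>2))", OF T(1) _ Gf_meas[OF cont] _ _ _ _ _ _ _ GK])
    show "(\<lambda>r. r * sqrt (T\<^sup>2 - r\<^sup>2) / (1 - r\<^sup>2)) \<in> borel_measurable borel" by measurable
    show "\<And>t. t \<in> {0..T} \<Longrightarrow> 0 \<le> Gf \<phi> t" using Gf_nn[OF pos sq_lt1] T by auto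
    show "0 \<le> r * sqrt (T\<^sup>2 - r\<^sup>2) / (1 - r\<^sup>2)" if r: "r \<in> {0..T}" for r
    proof -
      have "0 < 1 - r\<^sup>2" using sq_lt1[of r T] r T by auto
      moreover have "0 \<le> sqrt (T\<^sup>2 - r\<^sup>2)" using r by (auto intro!: power_mono)
      ultimately show ?thesis using r by simp
    qed
    show "\<And>r. r \<in> {0<..T} \<Longrightarrow> \<exists>L. ((\<lambda>t. Gf \<phi> t / sqrt (r\<^sup>2 - t\<^sup>2)) has_integral L) {0..r} \<and> pi / 2 \<le> L"
      using curve_half[OF len cont ev] T by auto
    show "((\<lambda>r. r * sqrt (T\<^sup>2 - r\<^sup>2) / (1 - r\<^sup>2)) has_integral T - c * arctan (T / c)) {0..T}"
      unfolding c_def by (rule Wmid[OF T])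
    show "\<And>t. t \<in> {0..<T} \<Longrightarrow> ((\<lambda>r. r * sqrt (T\<^sup>2 - r\<^sup>2) / (1 - r\<^sup>2) / sqrt (r\<^sup>2 - t\<^sup>2)) has_integral pi / 2 * (1 - c / sqrt (1 - t\<^sup>2))) {t..T}"
      unfolding c_def using Kmid T by auto
    show "\<And>t. t \<in> {0..T} \<Longrightarrow> 0 \<le> pi / 2 * (1 - c / sqrt (1 - t\<^sup>2))"
    proof -
      fix t assume t: "t \<in> {0..T}"
      have "0 < sqrt (1 - t\<^sup>2)" using sq_lt1[of t T] t T by auto
      then have "c / sqrt (1 - t\<^sup>2) \<le> 1" using cle[OF t] by simp
      then show "0 \<le> pi / 2 * (1 - c / sqrt (1 - t\<^sup>2))" by simp
    qed
  qed auto
  then show ?thesis unfolding h_def c_def by simp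
qed

lemma affine_sub:
  fixes f :: "real \<Rightarrow> real"
  assumes cont: "continuous_on UNIV f" and ab: "a \<le> b"
  shows "((\<lambda>x. m * f (m * x + c)) has_integral integral {m * a + c..m * b + c} f - integral {m * b + c..m * a + c} f) {a..b}"
proof -
  have mono: "(m*a \<le> m*x \<and> m*x \<le> m*b) \<or> (m*b \<le> m*x \<and> m*x \<le> m*a)" if "x \<in> {a..b}" for x
    using that by (cases "m \<ge> 0") (auto intro: mult_left_mono mult_left_mono_neg)
  have "((\<lambda>x. m *\<^sub>R f (m * x + c)) has_integral integral {m * a + c..m * b + c} f - integral {m * b + c..m * a + c} f) {a..b}"
    by (rule has_integral_substitution_general[where g = "\<lambda>x. m * x + c" and c = "min (m*a+c) (m*b+c)" and d = "max (m*a+c) (m*b+c)", OF finite.emptyI ab])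
       (auto intro!: continuous_on_subset[OF cont] continuous_intros derivative_eq_intros
             simp: min_def max_def dest!: mono)
  then show ?thesis by simp
qed

lemma int_4beta:
  fixes \<phi> :: "real \<Rightarrow> real"
  assumes cont: "continuous_on UNIV \<phi>" and ev: "\<And>y. \<phi> (- y) = \<phi> y" and per: "\<And>y. \<phi> (y + 2 * \<beta>) = \<phi> y"
    and b: "0 < \<beta>"
  shows "integral {0..4 * \<beta>} \<phi> = 4 * integral {0..\<beta>} \<phi>"
proof -
  have int: "\<phi> integrable_on {a..b}" for a b by (rule integrable_continuous_real[OF continuous_on_subset[OF cont]]) auto
  define I where "I = integral {0..\<beta>} \<phi>"
  have I: "(\<phi> has_integral I) {0..\<beta>}" unfolding I_def using int by blast
  have "((\<lambda>x. - \<phi> (2 * \<beta> - x)) has_integral - I) {\<beta>..2*\<beta>}"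
    using affine_sub[OF cont, of \<beta> "2*\<beta>" "-1" "2*\<beta>"] b by (simp add: I_def)
  from has_integral_neg[OF this] have "((\<lambda>x. \<phi> (2 * \<beta> - x)) has_integral I) {\<beta>..2*\<beta>}" by simp
  then have I2: "(\<phi> has_integral I) {\<beta>..2*\<beta>}"
  proof (rule has_integral_eq[rotated])
    fix x show "\<phi> (2 * \<beta> - x) = \<phi> x" using per[of "-x"] ev[of x] by simp
  qed
  have B: "(\<phi> has_integral I + I) {0..2*\<beta>}"
    by (rule has_integral_combine[OF _ _ I I2]) (use b in auto)
  then have B': "integral {0..2*\<beta>} \<phi> = 2 * I" by (simp add: integral_unique)
  have "((\<lambda>x. 1 * \<phi> (1 * x + - (2 * \<beta>))) has_integral integral {0..2*\<beta>} \<phi> - integral {2*\<beta>..0} \<phi>) {2*\<beta>..4*\<beta>}"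
    using affine_sub[OF cont, of "2*\<beta>" "4*\<beta>" 1 "- (2*\<beta>)"] b by simp
  then have "((\<lambda>x. \<phi> (x - 2 * \<beta>)) has_integral 2 * I) {2*\<beta>..4*\<beta>}" using b B' by simp
  then have C: "(\<phi> has_integral 2 * I) {2*\<beta>..4*\<beta>}"
  proof (rule has_integral_eq[rotated])
    fix x show "\<phi> (x - 2 * \<beta>) = \<phi> x" using per[of "x - 2*\<beta>"] by simp
  qed
  have "(\<phi> has_integral (I + I) + 2 * I) {0..4*\<beta>}"
    by (rule has_integral_combine[OF _ _ B C]) (use b in auto)
  then show ?thesis unfolding I_def by (simp add: integral_unique)
qed

lemma vert_bound:
  fixes \<phi> :: "real \<Rightarrow> real"
  assumes len: "\<And>\<gamma> l. noncontr_loop \<beta> \<gamma> \<Longrightarrow> conf_length \<phi> \<gamma> l \<Longrightarrow> pi \<le> l"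
    and cont: "continuous_on UNIV \<phi>" and ev: "\<And>y. \<phi> (- y) = \<phi> y" and per: "\<And>y. \<phi> (y + 2 * \<beta>) = \<phi> y"
    and b: "0 < \<beta>"
  shows "pi / 4 \<le> integral {0..\<beta>} \<phi>"
proof -
  define \<gamma> where "\<gamma> = (\<lambda>t::real. (0::real, 4 * \<beta> * t))"
  have d: "\<And>t. (\<gamma> has_vector_derivative (0, 4 * \<beta>)) (at t)"
    unfolding \<gamma>_def by (auto intro!: derivative_eq_intros simp: has_vector_derivative_def)
  have loop: "noncontr_loop \<beta> \<gamma>"
    by (rule loopI[OF d, where k=0 and m=1]) (auto simp: \<gamma>_def deck_def)
  have "((\<lambda>x. (4 * \<beta>) * \<phi> ((4 * \<beta>) * x + 0)) has_integral integral {(4*\<beta>) * 0 + 0..(4*\<beta>) * 1 + 0} \<phi> - integral {(4*\<beta>) * 1 + 0..(4*\<beta>) * 0 + 0} \<phi>) {0..1}"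
    by (rule affine_sub[OF cont]) simp
  then have "((\<lambda>t. \<phi> (snd (\<gamma> t)) * norm ((0::real), 4 * \<beta>)) has_integral integral {0..4*\<beta>} \<phi>) {0..1}"
    using b by (simp add: \<gamma>_def mult.commute)
  then have "conf_length \<phi> \<gamma> (integral {0..4*\<beta>} \<phi>)" by (rule conf_lengthI[OF d])
  then have "pi \<le> integral {0..4*\<beta>} \<phi>" by (rule len[OF loop])
  then show ?thesis using int_4beta[OF cont ev per b] by simp
qed

lemma conv_Gf:
  fixes \<phi> :: "real \<Rightarrow> real"
  assumes cont: "continuous_on UNIV \<phi>" and a: "0 \<le> a"
  shows "integral {0..a} (\<lambda>y. \<phi> y * phi0 y) = integral {0..tanh a} (Gf \<phi>)"
    and "integral {0..a} \<phi> = integral {0..tanh a} (\<lambda>t. Gf \<phi> t / sqrt (1 - t\<^sup>2))"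
proof -
  have tb: "0 \<le> tanh a" "tanh a < 1" using tanh_bound[OF a] by auto
  have t1: "-1 < t \<and> t < 1 \<and> 0 < 1 - t\<^sup>2" if "t \<in> {0..tanh a}" for t
    using that tb sq_lt1[of t "tanh a"] by auto
  have c1: "continuous_on {0..a} (\<lambda>y. \<phi> y * phi0 y)"
    by (intro continuous_intros phi0_cont continuous_on_subset[OF cont]) auto
  have "((\<lambda>t. \<phi> (artanh t) * phi0 (artanh t) / (1 - t\<^sup>2)) has_integral integral {0..a} (\<lambda>y. \<phi> y * phi0 y)) {0..tanh a}"
    using conv[OF a c1] by simp
  then have "(Gf \<phi> has_integral integral {0..a} (\<lambda>y. \<phi> y * phi0 y)) {0..tanh a}"
  proof (rule has_integral_eq[rotated])
    fix t assume t: "t \<in> {0..tanh a}"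
    have s: "1 - t\<^sup>2 = (sqrt (1 - t\<^sup>2))\<^sup>2" using t1[OF t] by simp
    have sp: "0 < sqrt (1 - t\<^sup>2)" using t1[OF t] by simp
    show "\<phi> (artanh t) * phi0 (artanh t) / (1 - t\<^sup>2) = Gf \<phi> t"
    proof -
      have g0: "\<And>x q. 0 < q \<Longrightarrow> x * q / q\<^sup>2 = x / (q::real)"
        by (simp add: power2_eq_square)
      note g = g0[OF sp]
      show ?thesis
        unfolding Gf_def phi0_artanh[of t, OF conjunct1[OF t1[OF t]] conjunct1[OF conjunct2[OF t1[OF t]]]]
        using g unfolding s[symmetric] .
    qed
  qed
  then show "integral {0..a} (\<lambda>y. \<phi> y * phi0 y) = integral {0..tanh a} (Gf \<phi>)"
    by (simp add: integral_unique)
  have "((\<lambda>t. \<phi> (artanh t) / (1 - t\<^sup>2)) has_integral integral {0..a} \<phi>) {0..tanh a}"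
    using conv[OF a continuous_on_subset[OF cont]] by simp
  then have "((\<lambda>t. Gf \<phi> t / sqrt (1 - t\<^sup>2)) has_integral integral {0..a} \<phi>) {0..tanh a}"
  proof (rule has_integral_eq[rotated])
    fix t assume t: "t \<in> {0..tanh a}"
    have s: "1 - t\<^sup>2 = (sqrt (1 - t\<^sup>2))\<^sup>2" using t1[OF t] by simp
    have sp: "0 < sqrt (1 - t\<^sup>2)" using t1[OF t] by simp
    show "\<phi> (artanh t) / (1 - t\<^sup>2) = Gf \<phi> t / sqrt (1 - t\<^sup>2)"
    proof -
      have g0: "\<And>x q. 0 < q \<Longrightarrow> x / q\<^sup>2 = x / q / (q::real)"
        by (simp add: power2_eq_square)
      note g = g0[OF sp]
      show ?thesis unfolding Gf_def using g unfolding s[symmetric] .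
    qed
  qed
  then show "integral {0..a} \<phi> = integral {0..tanh a} (\<lambda>t. Gf \<phi> t / sqrt (1 - t\<^sup>2))"
    by (simp add: integral_unique)
qed

lemma phi0_sq_int: "0 \<le> a \<Longrightarrow> integral {0..a} (\<lambda>y. phi0 y * phi0 y) = tanh a"
proof -
  assume a: "0 \<le> a"
  have tb: "0 \<le> tanh a" "tanh a < 1" using tanh_bound[OF a] by auto
  have "integral {0..tanh a} (Gf phi0) = integral {0..tanh a} (\<lambda>t. 1)"
  proof (rule integral_cong)
    fix t assume t: "t \<in> {0..tanh a}"
    have "0 < 1 - t\<^sup>2" using sq_lt1[of t "tanh a"] t tb by auto
    then show "Gf phi0 t = 1" unfolding Gf_def using t tb by (simp add: phi0_artanh)
  qed
  then show ?thesis using conv_Gf(1)[OF phi0_cont a] tb by simp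
qed

lemma phi0_int: "0 \<le> a \<Longrightarrow> integral {0..a} phi0 = arcsin (tanh a)"
proof -
  assume a: "0 \<le> a"
  have tb: "0 \<le> tanh a" "tanh a < 1" using tanh_bound[OF a] by auto
  have "integral {0..tanh a} (\<lambda>t. Gf phi0 t / sqrt (1 - t\<^sup>2)) = integral {0..tanh a} (\<lambda>t. 1 / sqrt (1 - t\<^sup>2))"
  proof (rule integral_cong)
    fix t assume t: "t \<in> {0..tanh a}"
    have "0 < 1 - t\<^sup>2" using sq_lt1[of t "tanh a"] t tb by auto
    then show "Gf phi0 t / sqrt (1 - t\<^sup>2) = 1 / sqrt (1 - t\<^sup>2)" unfolding Gf_def using t tb by (simp add: phi0_artanh)
  qed
  also have "\<dots> = arcsin (tanh a) - arcsin 0"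
  proof (rule integral_unique[OF fundamental_theorem_of_calculus_interior[OF tb(1)]])
    show "continuous_on {0..tanh a} arcsin"
      using tb by (auto intro!: continuous_intros)
    fix t assume t: "t \<in> {0<..<tanh a}"
    have t1: "-1 < t" "t < 1" using t tb by auto
    show "(arcsin has_vector_derivative 1 / sqrt (1 - t\<^sup>2)) (at t)"
      using DERIV_arcsin[OF t1] by (simp add: has_real_derivative_iff_has_vector_derivative divide_inverse)
  qed
  finally show ?thesis using conv_Gf(2)[OF phi0_cont a] by simp
qed

lemma phi0_cosh: "phi0 y = 1 / cosh y"
proof -
  have "cosh y = (exp y + inverse (exp y)) / 2" unfolding cosh_def by (simp add: exp_minus)
  moreover have "exp (2 * y) = exp y * exp y" by (simp add: exp_add[symmetric])
  moreover have "1 + exp y * exp y > 0" by (simp add: add_pos_pos)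
  ultimately show ?thesis unfolding phi0_def by (simp add: field_simps)
qed

lemma phi0_decr: "0 \<le> x \<Longrightarrow> x < y \<Longrightarrow> phi0 y < phi0 x"
  unfolding phi0_cosh using cosh_real_strict_mono[of x y]
  by (simp add: frac_less2 cosh_real_pos)

lemma phi0_tanh: "phi0 s = sqrt (1 - (tanh s)\<^sup>2)"
  using phi0_artanh[of "tanh s"] tanh_real_bounds[of s] by (simp add: artanh_tanh_real)

lemma tanh_beta0: "tanh beta0 = sqrt 2 / 2"
proof -
  have e: "exp beta0 = 1 + sqrt 2" unfolding beta0_def by (simp add: add_pos_pos)
  have ei: "inverse (1 + sqrt 2) = sqrt 2 - 1"
    by (rule inverse_unique) (simp add: algebra_simps)
  have "sinh beta0 = 1" unfolding sinh_def exp_minus e ei by simp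
  moreover have "cosh beta0 = sqrt 2" unfolding cosh_def exp_minus e ei by simp
  ultimately show ?thesis unfolding tanh_def by (simp add: field_simps)
qed

lemma beta0_pos: "0 < beta0" unfolding beta0_def by (rule ln_gt_zero) simp
lemma beta1_pos: "0 < beta1" unfolding beta1_def by (rule ln_gt_zero) (simp add: add_pos_nonneg)

lemma phi0_le: "0 \<le> x \<Longrightarrow> x \<le> y \<Longrightarrow> phi0 y \<le> phi0 x"
  using phi0_decr[of x y] by (cases "x = y") auto

lemma s_beta_prop:
  assumes b: "pi / 4 < \<beta>" "\<beta> < beta0"
  shows "0 < s_beta \<beta> \<and> s_beta \<beta> < \<beta> \<and> integral {0..s_beta \<beta>} phi0 + (\<beta> - s_beta \<beta>) * phi0 (s_beta \<beta>) = pi / 4"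
proof -
  define H where "H = (\<lambda>s. integral {0..s} phi0 + (\<beta> - s) * phi0 s)"
  have bpos: "0 < \<beta>" using b pi_gt_zero by linarith
  have Hf: "H s = arcsin (tanh s) + (\<beta> - s) * phi0 s" if "0 \<le> s" for s
    unfolding H_def using phi0_int[OF that] by simp
  have c1: "continuous_on {0..\<beta>} (\<lambda>s. tanh s)"
    by (rule continuous_on_tanh[OF continuous_on_id]) (metis cosh_real_pos less_irrefl)
  have c2: "continuous_on {0..\<beta>} (\<lambda>s. arcsin (tanh s))"
  proof (rule continuous_on_arcsin[OF c1])
    show "\<forall>x\<in>{0..\<beta>}. - 1 \<le> tanh x \<and> tanh x \<le> 1"
      using tanh_real_bounds by (simp add: less_imp_le)
  qed
  have c3: "continuous_on {0..\<beta>} (\<lambda>s. (\<beta> - s) * phi0 s)"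
    by (rule continuous_on_mult[OF continuous_on_diff[OF continuous_on_const continuous_on_id] phi0_cont])
  have Fc: "continuous_on {0..\<beta>} (\<lambda>s. arcsin (tanh s) + (\<beta> - s) * phi0 s)"
    by (rule continuous_on_add[OF c2 c3])
  have a45: "arcsin (sqrt 2 / 2) = pi / 4" using arcsin_sin[of "pi/4"] sin_45 by simp
  have tb: "tanh \<beta> < sqrt 2 / 2" using tanh_real_strict_mono b(2) tanh_beta0 by (metis strict_monoD)
  have Fb: "arcsin (tanh \<beta>) < pi / 4"
  proof -
    have "\<bar>tanh \<beta>\<bar> \<le> 1" using tanh_real_bounds[of \<beta>] by auto
    moreover have "\<bar>sqrt 2 / 2\<bar> \<le> (1::real)"
    proof -
      have "sqrt 2 \<le> sqrt (4::real)" by (rule real_sqrt_le_mono) simp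
      then have "sqrt 2 \<le> (2::real)" by (simp add: real_sqrt_four)
      then show ?thesis by simp
    qed
    ultimately show ?thesis using arcsin_less_mono tb a45 by metis
  qed
  have phi00: "phi0 0 = 1" unfolding phi0_def by simp
  obtain x where x: "0 \<le> x" "x \<le> \<beta>" "arcsin (tanh x) + (\<beta> - x) * phi0 x = pi / 4"
    using IVT2'[of "\<lambda>s. arcsin (tanh s) + (\<beta> - s) * phi0 s" \<beta> "pi/4" 0, OF _ _ _ Fc] Fb b bpos phi00
    by auto
  have x0: "x \<noteq> 0" using x(3) b phi00 by auto
  have xb: "x \<noteq> \<beta>" using x(3) Fb by auto
  have Hx: "H x = pi / 4" using Hf[OF x(1)] x(3) by simp
  have decr: "H s2 < H s1" if s: "0 \<le> s1" "s1 < s2" "s2 < \<beta>" for s1 s2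
  proof -
    have int: "phi0 integrable_on {a..b}" for a b by (rule integrable_continuous_real[OF phi0_cont])
    have comb: "integral {0..s2} phi0 = integral {0..s1} phi0 + integral {s1..s2} phi0"
      using Henstock_Kurzweil_Integration.integral_combine[where a=0 and c=s1 and b=s2 and f=phi0] int s by simp
    have le: "integral {s1..s2} phi0 \<le> integral {s1..s2} (\<lambda>x. phi0 s1)"
      by (rule integral_le[OF int]) (use s phi0_le in auto)
    have "integral {s1..s2} (\<lambda>x. phi0 s1) = (s2 - s1) * phi0 s1" using s by simp
    moreover have "phi0 s2 < phi0 s1" using phi0_decr s by auto
    ultimately have "(\<beta> - s2) * phi0 s2 < (\<beta> - s2) * phi0 s1" using s by simp
    then show ?thesis unfolding H_def comb using le \<open>integral {s1..s2} (\<lambda>x. phi0 s1) = _\<close>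
      by (simp add: algebra_simps)
  qed
  have uniq: "\<exists>!s. 0 < s \<and> s < \<beta> \<and> H s = pi / 4"
  proof (rule ex1I[of _ x])
    show "0 < x \<and> x < \<beta> \<and> H x = pi / 4" using x x0 xb Hx by auto
    fix y assume y: "0 < y \<and> y < \<beta> \<and> H y = pi / 4"
    show "y = x"
    proof (rule ccontr)
      assume "y \<noteq> x"
      then consider "y < x" | "x < y" by linarith
      then show False
      proof cases
        case 1 then show False using decr[of y x] y x x0 xb Hx by auto
      next
        case 2 then show False using decr[of x y] y x x0 xb Hx by auto
      qed
    qed
  qed
  have "s_beta \<beta> = (THE s. 0 < s \<and> s < \<beta> \<and> H s = pi / 4)" unfolding s_beta_def H_def ..
  then show ?thesis using theI'[OF uniq] unfolding H_def by simp
qed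

lemma piece_int:
  fixes f h :: "real \<Rightarrow> real"
  assumes "continuous_on {a..b} f" "finite S" "\<And>x. x \<in> {a..b} - S \<Longrightarrow> h x = f x"
  shows "(h has_integral integral {a..b} f) {a..b}"
  by (rule has_integral_spike_finite[OF assms(2) assms(3) integrable_integral[OF integrable_continuous_real[OF assms(1)]]])

lemma basics:
  fixes \<beta> :: real and \<phi> :: "real \<Rightarrow> real"
  assumes "\<beta> > 0" and "smooth_fun \<phi>" and "\<forall>y. \<phi> y > 0" and "H_invariant \<beta> \<phi>" and "sys \<beta> \<phi> = pi"
  shows "continuous_on UNIV \<phi>" "\<And>y. 0 < \<phi> y" "\<And>y. \<phi> (- y) = \<phi> y" "\<And>y. \<phi> (y + 2 * \<beta>) = \<phi> y"
    "\<And>\<gamma> l. noncontr_loop \<beta> \<gamma> \<Longrightarrow> conf_length \<phi> \<gamma> l \<Longrightarrow> pi \<le> l"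
    "\<And>y. 1 / 2 \<le> \<phi> y" "pi / 4 \<le> integral {0..\<beta>} \<phi>"
proof -
  show cont: "continuous_on UNIV \<phi>" by (rule smooth_cont[OF assms(2)])
  show "\<And>y. 0 < \<phi> y" using assms(3) by blast
  show ev: "\<And>y. \<phi> (- y) = \<phi> y" using assms(4) unfolding H_invariant_def by metis
  show per: "\<And>y. \<phi> (y + 2 * \<beta>) = \<phi> y" using assms(4) unfolding H_invariant_def by metis
  show len: "\<And>\<gamma> l. noncontr_loop \<beta> \<gamma> \<Longrightarrow> conf_length \<phi> \<gamma> l \<Longrightarrow> pi \<le> l"
    using len_ge[OF assms(3) assms(5)] by blast
  show "\<And>y. 1 / 2 \<le> \<phi> y"
  proof -
    fix y
    have "pi \<le> 2 * pi * \<phi> y" using len[OF horiz_loop(1) horiz_loop(2)] .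
    then show "1 / 2 \<le> \<phi> y" by simp
  qed
  show "pi / 4 \<le> integral {0..\<beta>} \<phi>"
    by (rule vert_bound[OF _ cont ev per assms(1)]) (fact len)
qed


lemma caseA:
  fixes \<phi> :: "real \<Rightarrow> real"
  assumes b: "0 < \<beta>" "\<beta> \<le> pi / 4" and cont: "continuous_on UNIV \<phi>" and vert: "pi / 4 \<le> integral {0..\<beta>} \<phi>"
  shows "integral {0..\<beta>} (\<lambda>y. (phi_beta \<beta> y)\<^sup>2) \<le> integral {0..\<beta>} (\<lambda>y. \<phi> y * phi_beta \<beta> y)"
proof -
  define c where "c = pi / (4 * \<beta>)"
  have pb: "phi_beta \<beta> y = c" for y unfolding phi_beta_def c_def using b by simp
  have c: "0 < c" unfolding c_def using b by simp
  have "integral {0..\<beta>} (\<lambda>y. \<phi> y * phi_beta \<beta> y) = integral {0..\<beta>} \<phi> * c"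
    unfolding pb by (rule integral_mult_left)
  moreover have "integral {0..\<beta>} (\<lambda>y. (phi_beta \<beta> y)\<^sup>2) = \<beta> * c\<^sup>2" unfolding pb using b by simp
  moreover have "\<beta> * c\<^sup>2 = pi / 4 * c" unfolding c_def using b by (simp add: power2_eq_square)
  moreover have "pi / 4 * c \<le> integral {0..\<beta>} \<phi> * c" by (rule mult_right_mono[OF vert]) (use c in simp)
  ultimately show ?thesis by linarith
qed

lemma caseC:
  fixes \<phi> :: "real \<Rightarrow> real"
  assumes b: "0 < \<beta>" and pb: "\<And>y. phi_beta \<beta> y = phi0 y"
    and len: "\<And>\<gamma> l. noncontr_loop \<beta> \<gamma> \<Longrightarrow> conf_length \<phi> \<gamma> l \<Longrightarrow> pi \<le> l"
    and cont: "continuous_on UNIV \<phi>" and pos: "\<And>y. 0 < \<phi> y" and ev: "\<And>y. \<phi> (- y) = \<phi> y"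
  shows "integral {0..\<beta>} (\<lambda>y. (phi_beta \<beta> y)\<^sup>2) \<le> integral {0..\<beta>} (\<lambda>y. \<phi> y * phi_beta \<beta> y)"
proof -
  have tb: "0 < tanh \<beta>" "tanh \<beta> < 1" using b tanh_real_lt_1 by auto
  have "integral {0..\<beta>} (\<lambda>y. (phi_beta \<beta> y)\<^sup>2) = tanh \<beta>"
    unfolding pb power2_eq_square using phi0_sq_int b by simp
  also have "\<dots> \<le> integral {0..tanh \<beta>} (Gf \<phi>)" by (rule R1[OF _ cont pos ev tb]) (fact len)
  also have "\<dots> = integral {0..\<beta>} (\<lambda>y. \<phi> y * phi_beta \<beta> y)"
    unfolding pb using conv_Gf(1)[OF cont] b by simp
  finally show ?thesis .
qed


lemma caseD:
  fixes \<phi> :: "real \<Rightarrow> real"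
  assumes b: "beta1 < \<beta>" and pb: "\<And>y. phi_beta \<beta> y = (if y \<le> beta1 then phi0 y else 1 / 2)"
    and len: "\<And>\<gamma> l. noncontr_loop \<beta> \<gamma> \<Longrightarrow> conf_length \<phi> \<gamma> l \<Longrightarrow> pi \<le> l"
    and cont: "continuous_on UNIV \<phi>" and pos: "\<And>y. 0 < \<phi> y" and ev: "\<And>y. \<phi> (- y) = \<phi> y"
    and half: "\<And>y. 1 / 2 \<le> \<phi> y"
  shows "integral {0..\<beta>} (\<lambda>y. (phi_beta \<beta> y)\<^sup>2) \<le> integral {0..\<beta>} (\<lambda>y. \<phi> y * phi_beta \<beta> y)"
proof -
  have b1: "0 < beta1" by (rule beta1_pos)
  have cphi: "continuous_on S \<phi>" for S using continuous_on_subset[OF cont] by blast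
  have hA: "((\<lambda>y. \<phi> y * phi_beta \<beta> y) has_integral integral {0..beta1} (\<lambda>y. \<phi> y * phi0 y)) {0..beta1}"
    by (rule piece_int[where S = "{}"]) (auto intro!: continuous_intros cphi phi0_cont simp: pb)
  have hB: "((\<lambda>y. \<phi> y * phi_beta \<beta> y) has_integral integral {beta1..\<beta>} (\<lambda>y. \<phi> y * (1/2))) {beta1..\<beta>}"
    by (rule piece_int[where S = "{beta1}"]) (auto intro!: continuous_intros cphi simp: pb)
  have "((\<lambda>y. \<phi> y * phi_beta \<beta> y) has_integral integral {0..beta1} (\<lambda>y. \<phi> y * phi0 y) + integral {beta1..\<beta>} (\<lambda>y. \<phi> y * (1/2))) {0..\<beta>}"
    by (rule has_integral_combine[OF _ _ hA hB]) (use b b1 in auto)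
  then have L: "integral {0..\<beta>} (\<lambda>y. \<phi> y * phi_beta \<beta> y) = integral {0..beta1} (\<lambda>y. \<phi> y * phi0 y) + integral {beta1..\<beta>} (\<lambda>y. \<phi> y * (1/2))"
    by (rule integral_unique)
  have gA: "((\<lambda>y. (phi_beta \<beta> y)\<^sup>2) has_integral integral {0..beta1} (\<lambda>y. phi0 y * phi0 y)) {0..beta1}"
    by (rule piece_int[where S = "{}"]) (auto intro!: continuous_intros phi0_cont simp: pb power2_eq_square)
  have gB: "((\<lambda>y. (phi_beta \<beta> y)\<^sup>2) has_integral integral {beta1..\<beta>} (\<lambda>y. 1/4)) {beta1..\<beta>}"
    by (rule piece_int[where S = "{beta1}"]) (auto intro!: continuous_intros simp: pb power2_eq_square)
  have "((\<lambda>y. (phi_beta \<beta> y)\<^sup>2) has_integral integral {0..beta1} (\<lambda>y. phi0 y * phi0 y) + integral {beta1..\<beta>} (\<lambda>y. 1/4)) {0..\<beta>}"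
    by (rule has_integral_combine[OF _ _ gA gB]) (use b b1 in auto)
  then have R: "integral {0..\<beta>} (\<lambda>y. (phi_beta \<beta> y)\<^sup>2) = integral {0..beta1} (\<lambda>y. phi0 y * phi0 y) + integral {beta1..\<beta>} (\<lambda>y. 1/4)"
    by (rule integral_unique)
  have tb: "0 < tanh beta1" "tanh beta1 < 1" using b1 tanh_real_lt_1 by auto
  have A: "integral {0..beta1} (\<lambda>y. phi0 y * phi0 y) \<le> integral {0..beta1} (\<lambda>y. \<phi> y * phi0 y)"
  proof -
    have "integral {0..beta1} (\<lambda>y. phi0 y * phi0 y) = tanh beta1" using phi0_sq_int b1 by simp
    also have "\<dots> \<le> integral {0..tanh beta1} (Gf \<phi>)" by (rule R1[OF _ cont pos ev tb]) (fact len)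
    also have "\<dots> = integral {0..beta1} (\<lambda>y. \<phi> y * phi0 y)" using conv_Gf(1)[OF cont] b1 by simp
    finally show ?thesis .
  qed
  have B: "integral {beta1..\<beta>} (\<lambda>y. 1/4) \<le> integral {beta1..\<beta>} (\<lambda>y. \<phi> y * (1/2))"
  proof (rule integral_le)
    fix x show "1/4 \<le> \<phi> x * (1/2)" using half[of x] by simp
  qed (auto intro!: integrable_continuous_real continuous_intros cphi)
  show ?thesis unfolding L R using A B by linarith
qed


lemma caseB:
  fixes \<phi> :: "real \<Rightarrow> real"
  assumes b: "pi / 4 < \<beta>" "\<beta> < beta0" and pb: "\<And>y. phi_beta \<beta> y = (if y \<le> s_beta \<beta> then phi0 y else phi0 (s_beta \<beta>))"
    and len: "\<And>\<gamma> l. noncontr_loop \<beta> \<gamma> \<Longrightarrow> conf_length \<phi> \<gamma> l \<Longrightarrow> pi \<le> l"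
    and cont: "continuous_on UNIV \<phi>" and pos: "\<And>y. 0 < \<phi> y" and ev: "\<And>y. \<phi> (- y) = \<phi> y"
    and vert: "pi / 4 \<le> integral {0..\<beta>} \<phi>"
  shows "integral {0..\<beta>} (\<lambda>y. (phi_beta \<beta> y)\<^sup>2) \<le> integral {0..\<beta>} (\<lambda>y. \<phi> y * phi_beta \<beta> y)"
proof -
  define s where "s = s_beta \<beta>"
  have sp: "0 < s" "s < \<beta>" "integral {0..s} phi0 + (\<beta> - s) * phi0 s = pi / 4"
    using s_beta_prop[OF b] unfolding s_def by auto
  define T where "T = tanh s"
  define c where "c = phi0 s"
  have tb: "0 < T" "T < 1" unfolding T_def using sp tanh_real_lt_1 by auto
  have cT: "c = sqrt (1 - T\<^sup>2)" unfolding c_def T_def by (rule phi0_tanh)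
  have c: "0 < c" unfolding c_def by (rule phi0_pos)
  have cphi: "continuous_on S \<phi>" for S using continuous_on_subset[OF cont] by blast
  have pb': "phi_beta \<beta> y = (if y \<le> s then phi0 y else c)" for y unfolding pb s_def c_def ..
  have hA: "((\<lambda>y. \<phi> y * phi_beta \<beta> y) has_integral integral {0..s} (\<lambda>y. \<phi> y * phi0 y)) {0..s}"
    by (rule piece_int[where S = "{}"]) (auto intro!: continuous_intros cphi phi0_cont simp: pb')
  have hB: "((\<lambda>y. \<phi> y * phi_beta \<beta> y) has_integral integral {s..\<beta>} (\<lambda>y. \<phi> y * c)) {s..\<beta>}"
    by (rule piece_int[where S = "{s}"]) (auto intro!: continuous_intros cphi simp: pb')
  have "((\<lambda>y. \<phi> y * phi_beta \<beta> y) has_integral integral {0..s} (\<lambda>y. \<phi> y * phi0 y) + integral {s..\<beta>} (\<lambda>y. \<phi> y * c)) {0..\<beta>}"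
    by (rule has_integral_combine[OF _ _ hA hB]) (use sp in auto)
  then have L: "integral {0..\<beta>} (\<lambda>y. \<phi> y * phi_beta \<beta> y) = integral {0..s} (\<lambda>y. \<phi> y * phi0 y) + integral {s..\<beta>} \<phi> * c"
    by (simp add: integral_unique integral_mult_left)
  have gA: "((\<lambda>y. (phi_beta \<beta> y)\<^sup>2) has_integral integral {0..s} (\<lambda>y. phi0 y * phi0 y)) {0..s}"
    by (rule piece_int[where S = "{}"]) (auto intro!: continuous_intros phi0_cont simp: pb' power2_eq_square)
  have gB: "((\<lambda>y. (phi_beta \<beta> y)\<^sup>2) has_integral integral {s..\<beta>} (\<lambda>y. c * c)) {s..\<beta>}"
    by (rule piece_int[where S = "{s}"]) (auto intro!: continuous_intros simp: pb' power2_eq_square)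
  have "((\<lambda>y. (phi_beta \<beta> y)\<^sup>2) has_integral integral {0..s} (\<lambda>y. phi0 y * phi0 y) + integral {s..\<beta>} (\<lambda>y. c * c)) {0..\<beta>}"
    by (rule has_integral_combine[OF _ _ gA gB]) (use sp in auto)
  then have R: "integral {0..\<beta>} (\<lambda>y. (phi_beta \<beta> y)\<^sup>2) = T + (\<beta> - s) * (c * c)"
    using phi0_sq_int[of s] sp unfolding T_def by (simp add: integral_unique)
  have Iphi: "integral {0..\<beta>} \<phi> = integral {0..s} \<phi> + integral {s..\<beta>} \<phi>"
    using Henstock_Kurzweil_Integration.integral_combine[where a=0 and c=s and b=\<beta> and f=\<phi>]
      integrable_continuous_real[OF cphi] sp by simp
  have conv1: "integral {0..s} (\<lambda>y. \<phi> y * phi0 y) = integral {0..T} (Gf \<phi>)"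
    unfolding T_def using conv_Gf(1)[OF cont] sp by simp
  have conv2: "integral {0..s} \<phi> = integral {0..T} (\<lambda>t. Gf \<phi> t / sqrt (1 - t\<^sup>2))"
    unfolding T_def using conv_Gf(2)[OF cont] sp by simp
  have Gc: "continuous_on {0..T} (Gf \<phi>)" using Gf_cont[OF cont] tb by simp
  have Gc2: "continuous_on {0..T} (\<lambda>t. Gf \<phi> t / sqrt (1 - t\<^sup>2))"
    using sq_lt1[of _ T] tb by (intro continuous_intros Gc) force
  have "integral {0..T} (\<lambda>t. Gf \<phi> t * (1 - c / sqrt (1 - t\<^sup>2)))
      = integral {0..T} (\<lambda>t. Gf \<phi> t - c * (Gf \<phi> t / sqrt (1 - t\<^sup>2)))"
    by (rule integral_cong) (simp add: algebra_simps)
  also have "\<dots> = integral {0..T} (Gf \<phi>) - c * integral {0..T} (\<lambda>t. Gf \<phi> t / sqrt (1 - t\<^sup>2))"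
  proof -
    have i1: "Gf \<phi> integrable_on {0..T}" by (rule integrable_continuous_real[OF Gc])
    have i2: "(\<lambda>t. Gf \<phi> t / sqrt (1 - t\<^sup>2)) integrable_on {0..T}" by (rule integrable_continuous_real[OF Gc2])
    have i3: "(\<lambda>t. c * (Gf \<phi> t / sqrt (1 - t\<^sup>2))) integrable_on {0..T}"
      using integrable_on_cmult_left[OF i2, of c] by simp
    show ?thesis unfolding integral_diff[OF i1 i3] integral_mult_right ..
  qed
  finally have E: "integral {0..T} (\<lambda>t. Gf \<phi> t * (1 - c / sqrt (1 - t\<^sup>2)))
      = integral {0..s} (\<lambda>y. \<phi> y * phi0 y) - c * integral {0..s} \<phi>" unfolding conv1 conv2 .
  have R2': "T - c * arcsin T \<le> integral {0..T} (\<lambda>t. Gf \<phi> t * (1 - c / sqrt (1 - t\<^sup>2)))"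
  proof -
    have "arcsin T = arctan (T / sqrt (1 - T\<^sup>2))" using tb by (simp add: arcsin_arctan)
    then show ?thesis using R2[OF _ cont pos ev tb] len unfolding cT by (metis (no_types, lifting))
  qed
  have ph: "integral {0..s} phi0 = arcsin T" unfolding T_def using phi0_int sp by simp
  have piq: "pi / 4 = arcsin T + (\<beta> - s) * c" using sp(3) unfolding ph c_def by simp
  have "c * (pi / 4) \<le> c * integral {0..\<beta>} \<phi>" using vert c by (simp add: mult_left_mono)
  then have V: "c * arcsin T + (\<beta> - s) * (c * c) \<le> c * integral {0..s} \<phi> + c * integral {s..\<beta>} \<phi>"
    unfolding piq Iphi by (simp add: algebra_simps)
  show ?thesis unfolding L R using R2' E V by (simp add: algebra_simps)
qed

theorem lemma2p4:
  fixes \<beta> :: real and \<phi> :: "real \<Rightarrow> real"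
  assumes "\<beta> > 0"
    and "smooth_fun \<phi>"
    and "\<forall>y. \<phi> y > 0"
    and "H_invariant \<beta> \<phi>"
    and "sys \<beta> \<phi> = pi"
  shows "integral {0..\<beta>} (\<lambda>y. \<phi> y * phi_beta \<beta> y) \<ge> integral {0..\<beta>} (\<lambda>y. (phi_beta \<beta> y)\<^sup>2)"
proof -
  note B = basics[OF assms]
  show ?thesis
  proof (cases "\<beta> \<le> pi / 4")
    case True
    then show ?thesis using caseA[OF assms(1) True B(1) B(7)] by simp
  next
    case nA: False
    show ?thesis
    proof (cases "\<beta> < beta0")
      case True
      have pb: "phi_beta \<beta> y = (if y \<le> s_beta \<beta> then phi0 y else phi0 (s_beta \<beta>))" for y
        unfolding phi_beta_def using nA True by simp
      show ?thesis using caseB[OF _ True pb B(5) B(1) B(2) B(3) B(7)] nA by simp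
    next
      case nB: False
      show ?thesis
      proof (cases "\<beta> \<le> beta1")
        case True
        have pb: "phi_beta \<beta> y = phi0 y" for y
          unfolding phi_beta_def using nA nB True by simp
        show ?thesis using caseC[OF assms(1) pb B(5) B(1) B(2) B(3)] by simp
      next
        case False
        have pb: "phi_beta \<beta> y = (if y \<le> beta1 then phi0 y else 1 / 2)" for y
          unfolding phi_beta_def using nA nB False by simp
        show ?thesis using caseD[OF _ pb B(5) B(1) B(2) B(3) B(6)] False by simp
      qed
    qed
  qed
qed

end
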